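(* Let $w=(w_k)_{k\ge0}$ be a weight sequence with $w_0>0$ and $w_k>0$ for some $k\ge1$. Suppose that $n\to\infty$ and $m=m(n)$ with $m/n\to\lambda$, where $0\le\lambda<\infty$. If $\lambda\le\nu$, then $Y_{(1)}=o_p(n)$, i.e., $Y_{(1)}/n\to0$ in probability.
   Context: A weight sequence is a sequence $w=(w_k)_{k\ge0}$ of nonnegative reals. $\Phi(t)=\sum_kw_kt^k$, $\rho$ its radius of convergence; $\Psi(t)=t\Phi'(t)/\Phi(t)$ for $\Phi(t)<\infty$, $\Psi(\rho)=\lim_{t\uparrow\rho}\Psi(t)$ if $\Phi(\rho)=\infty$; $\nu=\Psi(\rho)$. Balls-in-boxes: $\mathcal B_{m,n}=\{(y_1,\dots,y_n)\in\{0,1,\dots\}^n:\sum y_i=m\}$, weight $w(y)=\prod_iw_{y_i}$, $Z(m,n)=\sum_{y\in\mathcal B_{m,n}}w(y)$; when $Z(m,n)>0$, $B_{m,n}=(Y_1,\dots,Y_n)$ is random with $P(B_{m,n}=y)=w(y)/Z(m,n)$ (only $m,n$ with $Z(m,n)>0$ are considered). $Y_{(1)}=\max_iY_i$. *)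

theory Defs
  imports "HOL-Analysis.Analysis"
begin

definition Phi :: "(nat \<Rightarrow> real) \<Rightarrow> real \<Rightarrow> ennreal" where
  "Phi w t = (\<Sum>k. ennreal (w k * t ^ k))"

text \<open>Psi(t) = t Phi'(t) / Phi(t) = (sum_k k w_k t^k) / Phi(t), valued in [0,\<infinity>].\<close>
definition Psi :: "(nat \<Rightarrow> real) \<Rightarrow> real \<Rightarrow> ennreal" where
  "Psi w t = (\<Sum>k. ennreal (real k * w k * t ^ k)) / Phi w t"

text \<open>rho = radius of convergence of Phi; nu = Psi(rho), where Psi(rho) is the
  left limit of Psi at rho when Phi(rho) = \<infinity> (including the case rho = \<infinity>).\<close>
definition nu :: "(nat \<Rightarrow> real) \<Rightarrow> ennreal" where
  "nu w = (if conv_radius w = \<infinity> then Lim at_top (Psi w)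
           else (let r = real_of_ereal (conv_radius w) in
                 if Phi w r < \<infinity> then Psi w r else Lim (at_left r) (Psi w)))"

definition boxes :: "nat \<Rightarrow> nat \<Rightarrow> (nat \<Rightarrow> nat) set" where
  "boxes m n = {y. (\<forall>i\<ge>n. y i = 0) \<and> (\<Sum>i<n. y i) = m}"

definition wt :: "(nat \<Rightarrow> real) \<Rightarrow> nat \<Rightarrow> (nat \<Rightarrow> nat) \<Rightarrow> real" where
  "wt w n y = (\<Prod>i<n. w (y i))"

definition Z :: "(nat \<Rightarrow> real) \<Rightarrow> nat \<Rightarrow> nat \<Rightarrow> real" where
  "Z w m n = (\<Sum>y\<in>boxes m n. wt w n y)"

definition Pbb :: "(nat \<Rightarrow> real) \<Rightarrow> nat \<Rightarrow> nat \<Rightarrow> ((nat \<Rightarrow> nat) \<Rightarrow> bool) \<Rightarrow> real" where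
  "Pbb w m n P = (\<Sum>y\<in>{y\<in>boxes m n. P y}. wt w n y) / Z w m n"

definition Ymax :: "nat \<Rightarrow> (nat \<Rightarrow> nat) \<Rightarrow> nat" where
  "Ymax n y = (MAX i\<in>{..<n}. y i)"

end

theory Submission
  imports Defs "HOL-Real_Asymp.Real_Asymp"
begin

definition Zg :: "(nat \<Rightarrow> nat \<Rightarrow> real) \<Rightarrow> nat \<Rightarrow> nat \<Rightarrow> real" where
  "Zg f x N = (\<Sum>y\<in>boxes x N. \<Prod>i<N. f i (y i))"

lemma Z_Zg: "Z w x N = Zg (\<lambda>_. w) x N"
  by (simp add: Z_def Zg_def wt_def)

lemma boxes_0: "boxes x 0 = (if x = 0 then {\<lambda>_. 0} else {})"
  by (auto simp: boxes_def)

lemma boxes_Suc: "boxes x (Suc N) = (\<lambda>(k,y). y(N:=k)) ` (SIGMA k:{..x}. boxes (x-k) N)"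
proof (intro equalityI subsetI)
  fix y assume y: "y \<in> boxes x (Suc N)"
  define k where "k = y N"
  define y' where "y' = y(N:=0)"
  have s: "(\<Sum>i<Suc N. y i) = x" using y by (simp add: boxes_def)
  have s2: "(\<Sum>i<N. y' i) = (\<Sum>i<N. y i)" by (intro sum.cong) (auto simp: y'_def)
  have kx: "k \<le> x" using s by (simp add: k_def)
  have "y' \<in> boxes (x-k) N" using y s s2 by (auto simp: boxes_def y'_def k_def)
  moreover have "y = y'(N:=k)" by (auto simp: y'_def k_def)
  ultimately show "y \<in> (\<lambda>(k,y). y(N:=k)) ` (SIGMA k:{..x}. boxes (x-k) N)"
    using kx by force
next
  fix z assume "z \<in> (\<lambda>(k,y). y(N:=k)) ` (SIGMA k:{..x}. boxes (x-k) N)"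
  then obtain k y where k: "k \<le> x" and y: "y \<in> boxes (x-k) N" and z: "z = y(N:=k)" by auto
  have s2: "(\<Sum>i<N. z i) = (\<Sum>i<N. y i)" by (intro sum.cong) (auto simp: z)
  show "z \<in> boxes x (Suc N)" using y k s2 by (auto simp: boxes_def z)
qed

lemma boxes_inj: "inj_on (\<lambda>(k,y). y(N:=k)) (SIGMA k:{..x}. boxes (x-k) N)"
proof (rule inj_onI, clarsimp)
  fix k y k' y'
  assume y: "y \<in> boxes (x-k) N" and y': "y' \<in> boxes (x-k') N" and e: "y(N := k) = y'(N := k')"
  have "k = k'" using fun_cong[OF e, of N] by simp
  moreover have "y = y'"
  proof
    fix i show "y i = y' i"
      using fun_cong[OF e, of i] y y' by (cases "i = N") (auto simp: boxes_def)
  qed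
  ultimately show "k = k' \<and> y = y'" by simp
qed

lemma finite_boxes: "finite (boxes x N)"
proof (induction N arbitrary: x)
  case 0 then show ?case by (simp add: boxes_0)
next
  case (Suc N) then show ?case by (simp add: boxes_Suc)
qed

lemma Zg_0: "Zg f x 0 = (if x = 0 then 1 else 0)"
  by (simp add: Zg_def boxes_0)

lemma Zg_Suc: "Zg f x (Suc N) = (\<Sum>k\<le>x. f N k * Zg f (x-k) N)"
proof -
  have "Zg f x (Suc N) = (\<Sum>(k,y)\<in>(SIGMA k:{..x}. boxes (x-k) N). \<Prod>i<Suc N. f i ((y(N:=k)) i))"
  proof -
    have "Zg f x (Suc N) = sum ((\<lambda>y. \<Prod>i<Suc N. f i (y i)) \<circ> (\<lambda>(k,y). y(N:=k))) (SIGMA k:{..x}. boxes (x-k) N)"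
      unfolding Zg_def boxes_Suc by (rule sum.reindex[OF boxes_inj])
    also have "\<dots> = (\<Sum>(k,y)\<in>(SIGMA k:{..x}. boxes (x-k) N). \<Prod>i<Suc N. f i ((y(N:=k)) i))"
      by (intro sum.cong refl) auto
    finally show ?thesis .
  qed
  also have "\<dots> = (\<Sum>(k,y)\<in>(SIGMA k:{..x}. boxes (x-k) N). f N k * (\<Prod>i<N. f i (y i)))"
  proof -
    have aux: "(\<Prod>i<Suc N. f i ((y(N := k)) i)) = f N k * (\<Prod>i<N. f i (y i))" for k y
    proof -
      have "(\<Prod>i<N. f i ((y(N := k)) i)) = (\<Prod>i<N. f i (y i))" by (intro prod.cong) auto
      then show ?thesis by (simp add: mult.commute)
    qed
    show ?thesis by (intro sum.cong refl) (auto simp: aux)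
  qed
  also have "\<dots> = (\<Sum>k\<le>x. \<Sum>y\<in>boxes (x-k) N. f N k * (\<Prod>i<N. f i (y i)))"
    by (subst sum.Sigma) (auto simp: finite_boxes)
  also have "\<dots> = (\<Sum>k\<le>x. f N k * Zg f (x-k) N)"
    by (simp add: Zg_def sum_distrib_left)
  finally show ?thesis .
qed

lemma Zg_nonneg: "(\<And>i k. f i k \<ge> 0) \<Longrightarrow> Zg f x N \<ge> 0"
  unfolding Zg_def by (intro sum_nonneg prod_nonneg) auto

lemma Z_0: "Z w x 0 = (if x = 0 then 1 else 0)"
  by (simp add: Z_Zg Zg_0)

lemma Z_Suc: "Z w x (Suc N) = (\<Sum>k\<le>x. w k * Z w (x-k) N)"
  by (simp add: Z_Zg Zg_Suc)

lemma Z_nonneg: "(\<And>k. w k \<ge> 0) \<Longrightarrow> Z w x N \<ge> 0"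
  by (simp add: Z_Zg Zg_nonneg)

lemma Z_Suc_ge: assumes "\<And>k. w k \<ge> 0" "k \<le> x" shows "Z w x (Suc N) \<ge> w k * Z w (x-k) N"
proof -
  have "w k * Z w (x-k) N \<le> (\<Sum>k\<le>x. w k * Z w (x-k) N)"
    by (rule member_le_sum) (use assms Z_nonneg in auto)
  then show ?thesis by (simp add: Z_Suc)
qed

lemma Z_mono_w: assumes "\<And>k. 0 \<le> v k" "\<And>k. v k \<le> w k" shows "Z v x N \<le> Z w x N"
  unfolding Z_def wt_def by (intro sum_mono prod_mono) (use assms in auto)

definition PS :: "(nat \<Rightarrow> real) \<Rightarrow> real \<Rightarrow> real" where
  "PS w t = (\<Sum>k. w k * t ^ k)"
definition PS1 :: "(nat \<Rightarrow> real) \<Rightarrow> real \<Rightarrow> real" where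
  "PS1 w t = (\<Sum>k. real k * w k * t ^ k)"

lemma summable_fin: "(\<And>k. k > K \<Longrightarrow> f k = 0) \<Longrightarrow> summable (f :: nat \<Rightarrow> real)"
  by (rule sums_summable[OF sums_finite[of "{..K}"]]) (auto simp: not_le)

lemma suminf_fin: "(\<And>k. k > K \<Longrightarrow> f k = 0) \<Longrightarrow> suminf (f :: nat \<Rightarrow> real) = (\<Sum>k\<le>K. f k)"
  by (rule suminf_finite) (auto simp: not_le)

lemma PS_fin: "(\<And>k. k > K \<Longrightarrow> v k = 0) \<Longrightarrow> PS v t = (\<Sum>k\<le>K. v k * t ^ k)"
  unfolding PS_def by (rule suminf_fin) auto

lemma PS1_fin: "(\<And>k. k > K \<Longrightarrow> v k = 0) \<Longrightarrow> PS1 v t = (\<Sum>k\<le>K. real k * v k * t ^ k)"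
  unfolding PS1_def by (rule suminf_fin) auto

lemma Z_zero_beyond:
  assumes "\<And>k. k > K \<Longrightarrow> v k = 0" "x > K * N"
  shows "Z v x N = 0"
  using assms(2)
proof (induction N arbitrary: x)
  case 0 then show ?case by (simp add: Z_0)
next
  case (Suc N)
  have "v k * Z v (x - k) N = 0" if "k \<le> x" for k
  proof (cases "k \<le> K")
    case True
    then have "x - k > K * N" using Suc.prems that by (simp add: algebra_simps)
    then show ?thesis using Suc.IH by simp
  next
    case False then show ?thesis using assms(1) by simp
  qed
  then show ?case unfolding Z_Suc by (intro sum.neutral) auto
qed

lemma Z_dvd:
  assumes "\<And>k. v k \<noteq> 0 \<Longrightarrow> d dvd k" "Z v x N \<noteq> 0"
  shows "d dvd x"
  using assms(2)
proof (induction N arbitrary: x)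
  case 0 then show ?case by (simp add: Z_0 split: if_splits)
next
  case (Suc N)
  then obtain k where k: "k \<le> x" "v k * Z v (x - k) N \<noteq> 0"
    by (auto simp: Z_Suc elim: sum.not_neutral_contains_not_neutral)
  then have "d dvd k" "d dvd (x - k)" using assms(1) Suc.IH by auto
  then have "d dvd (k + (x - k))" by (rule dvd_add)
  then show ?case using k by simp
qed

lemma genfun:
  assumes "\<And>k. k > K \<Longrightarrow> v k = 0"
  shows "(\<Sum>x. Z v x N * s ^ x) = PS v s ^ N"
proof (induction N)
  case 0
  have "(\<Sum>x. Z v x 0 * s ^ x) = (\<Sum>x\<le>0. Z v x 0 * s ^ x)"
    by (rule suminf_fin) (simp add: Z_0)
  then show ?case by (simp add: Z_0)
next
  case (Suc N)
  have s1: "summable (\<lambda>k. norm (v k * s ^ k))"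
    by (rule summable_fin[of K]) (simp add: assms)
  have s2: "summable (\<lambda>k. norm (Z v k N * s ^ k))"
    by (rule summable_fin[of "K*N"]) (simp add: Z_zero_beyond[OF assms])
  have "PS v s * (\<Sum>x. Z v x N * s ^ x) = (\<Sum>k. \<Sum>i\<le>k. (v i * s ^ i) * (Z v (k - i) N * s ^ (k - i)))"
    unfolding PS_def by (rule Cauchy_product[OF s1 s2])
  also have "\<dots> = (\<Sum>k. Z v k (Suc N) * s ^ k)"
  proof (intro suminf_cong)
    fix k
    have "(\<Sum>i\<le>k. (v i * s ^ i) * (Z v (k - i) N * s ^ (k - i))) = (\<Sum>i\<le>k. s ^ k * (v i * Z v (k - i) N))"
    proof (intro sum.cong refl)
      fix i assume "i \<in> {..k}"
      then have "s ^ i * s ^ (k - i) = s ^ k" by (simp flip: power_add)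
      then show "(v i * s ^ i) * (Z v (k - i) N * s ^ (k - i)) = s ^ k * (v i * Z v (k - i) N)"
        by (metis (no_types, lifting) mult.commute mult.left_commute)
    qed
    then show "(\<Sum>i\<le>k. (v i * s ^ i) * (Z v (k - i) N * s ^ (k - i))) = Z v k (Suc N) * s ^ k"
      by (simp add: Z_Suc sum_distrib_left mult.commute)
  qed
  finally show ?case using Suc by simp
qed

lemma genfun_fin:
  assumes "\<And>k. k > K \<Longrightarrow> v k = 0"
  shows "(\<Sum>x\<le>K*N. Z v x N * s ^ x) = PS v s ^ N"
proof -
  have "(\<Sum>x. Z v x N * s ^ x) = (\<Sum>x\<le>K*N. Z v x N * s ^ x)"
    by (rule suminf_fin) (simp add: Z_zero_beyond[OF assms])
  then show ?thesis using genfun[OF assms] by simp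
qed

lemma jensen:
  fixes a :: "nat \<Rightarrow> real"
  assumes a0: "\<And>k. a k \<ge> 0" and sa: "summable a" and sb: "summable (\<lambda>k. real k * a k)"
    and sx: "summable (\<lambda>k. a k * x ^ k)" and x: "x > 0" and A: "suminf a > 0"
  shows "(\<Sum>k. a k * x ^ k) \<ge> suminf a * x powr ((\<Sum>k. real k * a k) / suminf a)"
proof -
  define A where "A = suminf a"
  define B where "B = (\<Sum>k. real k * a k)"
  define \<mu> where "\<mu> = B / A"
  define c where "c = x powr \<mu>"
  have c0: "c > 0" using x by (simp add: c_def)
  have le: "c * a k + (c * ln x) * (real k * a k) - (c * ln x * \<mu>) * a k \<le> a k * x ^ k" for k
  proof -
    have e0: "x ^ k = c * x powr (real k - \<mu>)"
      using x by (simp add: c_def flip: powr_add powr_realpow)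
    have e1: "x powr (real k - \<mu>) = exp ((real k - \<mu>) * ln x)"
      using x by (simp add: powr_def mult.commute)
    have e2: "1 + (real k - \<mu>) * ln x \<le> exp ((real k - \<mu>) * ln x)" by (rule exp_ge_add_one_self)
    have "x ^ k \<ge> c * (1 + (real k - \<mu>) * ln x)"
      unfolding e0 e1 using c0 e2 by (intro mult_left_mono) auto
    then have "a k * x ^ k \<ge> a k * (c * (1 + (real k - \<mu>) * ln x))"
      using a0[of k] by (rule mult_left_mono)
    then show ?thesis by (simp add: algebra_simps)
  qed
  have sums: "(\<lambda>k. c * a k + (c * ln x) * (real k * a k) - (c * ln x * \<mu>) * a k) sums
        (c * A + (c * ln x) * B - (c * ln x * \<mu>) * A)"
    unfolding A_def B_def
    by (intro sums_diff sums_add sums_mult summable_sums sa sb)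
  have "c * A + (c * ln x) * B - (c * ln x * \<mu>) * A = c * A"
    using A by (simp add: \<mu>_def A_def)
  then have "c * A \<le> (\<Sum>k. a k * x ^ k)"
    using suminf_le[OF le sums_summable[OF sums] sx] sums_unique[OF sums] by simp
  then show ?thesis by (simp add: c_def \<mu>_def A_def B_def mult.commute)
qed

locale finw =
  fixes v :: "nat \<Rightarrow> real" and K :: nat
  assumes v_nonneg: "\<And>k. v k \<ge> 0" and v0: "v 0 > 0" and v_supp: "\<And>k. k > K \<Longrightarrow> v k = 0"
begin

lemma PS_eq: "PS v s = (\<Sum>k\<le>K. v k * s ^ k)"
  by (rule PS_fin) (simp add: v_supp)

lemma PS1_eq: "PS1 v s = (\<Sum>k\<le>K. real k * v k * s ^ k)"
  by (rule PS1_fin) (simp add: v_supp)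

lemma PS_pos: assumes "s \<ge> 0" shows "PS v s \<ge> v 0"
proof -
  have "v 0 * s ^ 0 \<le> (\<Sum>k\<le>K. v k * s ^ k)"
    by (rule member_le_sum) (use assms v_nonneg in auto)
  then show ?thesis by (simp add: PS_eq)
qed

lemma PS1_nonneg: assumes "s \<ge> 0" shows "PS1 v s \<ge> 0"
  unfolding PS1_eq using assms v_nonneg by (intro sum_nonneg) auto

lemma Psi_cont: assumes "t > 0" shows "isCont (\<lambda>s. PS1 v s / PS v s) t"
proof -
  have "PS v t \<noteq> 0" using PS_pos[of t] v0 assms by auto
  then show ?thesis unfolding PS1_eq PS_eq by (intro continuous_intros) (simp add: PS_eq)
qed

lemma cont_PS: "continuous_on A (PS v)"
  unfolding PS_eq by (intro continuous_intros)

lemma cont_PS1: "continuous_on A (PS1 v)"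
  unfolding PS1_eq by (intro continuous_intros)

lemma jensen_fin:
  assumes s: "s > 0" and x: "x > 0"
  shows "PS v (s * x) \<ge> PS v s * x powr (PS1 v s / PS v s)"
proof -
  define a where "a = (\<lambda>k. v k * s ^ k)"
  have a0: "\<And>k. a k \<ge> 0" using v_nonneg s by (simp add: a_def)
  have sa: "summable a" by (rule summable_fin[of K]) (simp add: a_def v_supp)
  have sb: "summable (\<lambda>k. real k * a k)" by (rule summable_fin[of K]) (simp add: a_def v_supp)
  have sx: "summable (\<lambda>k. a k * x ^ k)" by (rule summable_fin[of K]) (simp add: a_def v_supp)
  have A: "suminf a = PS v s" by (simp add: a_def PS_def)
  have B: "(\<Sum>k. real k * a k) = PS1 v s" by (simp add: a_def PS1_def mult.assoc)
  have C: "(\<Sum>k. a k * x ^ k) = PS v (s * x)" by (simp add: a_def PS_def power_mult_distrib mult.assoc)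
  have "suminf a > 0" using A PS_pos[of s] v0 s by simp
  from jensen[OF a0 sa sb sx x this] show ?thesis by (simp add: A B C)
qed

lemma window:
  assumes t: "t > 0" and g: "\<gamma> > 0"
  shows "\<forall>\<^sub>F N in sequentially. PS v t ^ N / 2 \<le>
     (\<Sum>x\<in>{x\<in>{..K*N}. \<bar>real x - (PS1 v t / PS v t) * real N\<bar> \<le> \<gamma> * real N}. Z v x N * t ^ x)"
proof -
  define \<Psi> where "\<Psi> s = PS1 v s / PS v s" for s
  define \<mu> where "\<mu> = \<Psi> t"
  have G0: "PS v t > 0" using PS_pos[of t] v0 t by simp
  obtain d where d: "d > 0" "\<And>s. s \<noteq> t \<Longrightarrow> norm (s - t) < d \<Longrightarrow> norm (\<Psi> s - \<Psi> t) < \<gamma>"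
    using LIM_D[OF isContD[OF Psi_cont[OF t]] g] unfolding \<Psi>_def by blast
  define s where "s = t + d / 2"
  define s' where "s' = t - min (d/2) (t/2)"
  have s: "s > t" "\<Psi> s < \<mu> + \<gamma>" using d(1) d(2)[of s] by (auto simp: s_def \<mu>_def)
  have m: "0 < min (d/2) (t/2)" "min (d/2) (t/2) < d" using d(1) t by auto
  have s'1: "0 < s'" "s' < t" using m t by (auto simp: s'_def)
  have "norm (\<Psi> s' - \<Psi> t) < \<gamma>" using d(2)[of s'] m by (simp add: s'_def)
  then have s': "0 < s'" "s' < t" "\<Psi> s' > \<mu> - \<gamma>" using s'1 by (auto simp: \<mu>_def)
  define th1 where "th1 = PS v s * (t/s) powr (\<mu> + \<gamma>) / PS v t"
  define th2 where "th2 = PS v s' * (t/s') powr (\<mu> - \<gamma>) / PS v t"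
  have th1: "0 \<le> th1" "th1 < 1"
  proof -
    have "PS v t \<ge> PS v s * (t/s) powr \<Psi> s"
    proof -
      have "s * (t/s) = t" using s t by simp
      then show ?thesis using jensen_fin[of s "t/s"] s t unfolding \<Psi>_def by simp
    qed
    moreover have "(t/s) powr (\<mu> + \<gamma>) < (t/s) powr \<Psi> s"
      using s t by (intro powr_less_mono') auto
    moreover have "PS v s > 0" using PS_pos[of s] v0 s t by simp
    ultimately have "PS v s * (t/s) powr (\<mu> + \<gamma>) < PS v t"
      using mult_strict_left_mono[of "(t/s) powr (\<mu> + \<gamma>)" "(t/s) powr \<Psi> s" "PS v s"] by linarith
    then show "th1 < 1" using G0 by (simp add: th1_def)
    show "0 \<le> th1" using PS_pos[of s] v0 s t G0 by (simp add: th1_def)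
  qed
  have th2: "0 \<le> th2" "th2 < 1"
  proof -
    have "PS v t \<ge> PS v s' * (t/s') powr \<Psi> s'"
    proof -
      have "s' * (t/s') = t" using s' t by simp
      then show ?thesis using jensen_fin[of s' "t/s'"] s' t unfolding \<Psi>_def by simp
    qed
    moreover have "(t/s') powr (\<mu> - \<gamma>) < (t/s') powr \<Psi> s'"
      using s' t by (intro powr_less_mono) auto
    moreover have "PS v s' > 0" using PS_pos[of s'] v0 s' by simp
    ultimately have "PS v s' * (t/s') powr (\<mu> - \<gamma>) < PS v t"
      using mult_strict_left_mono[of "(t/s') powr (\<mu> - \<gamma>)" "(t/s') powr \<Psi> s'" "PS v s'"] by linarith
    then show "th2 < 1" using G0 by (simp add: th2_def)
    show "0 \<le> th2" using PS_pos[of s'] v0 s' G0 by (simp add: th2_def)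
  qed
  have ev1: "\<forall>\<^sub>F N in sequentially. th1 ^ N < 1/4"
    using th1 by (intro order_tendstoD(2)[OF LIMSEQ_power_zero]) auto
  have ev2: "\<forall>\<^sub>F N in sequentially. th2 ^ N < 1/4"
    using th2 by (intro order_tendstoD(2)[OF LIMSEQ_power_zero]) auto
  have main: "PS v t ^ N / 2 \<le>
     (\<Sum>x\<in>{x\<in>{..K*N}. \<bar>real x - \<mu> * real N\<bar> \<le> \<gamma> * real N}. Z v x N * t ^ x)"
    if N1: "th1 ^ N < 1/4" and N2: "th2 ^ N < 1/4" for N
  proof -
    define f where "f x = Z v x N * t ^ x" for x
    have f0: "f x \<ge> 0" for x using Z_nonneg[of v] v_nonneg t by (simp add: f_def)
    define A where "A = {..K*N}"
    define W where "W = {x\<in>A. \<bar>real x - \<mu> * real N\<bar> \<le> \<gamma> * real N}"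
    define U where "U = {x\<in>A. real x > (\<mu> + \<gamma>) * real N}"
    define L where "L = {x\<in>A. real x < (\<mu> - \<gamma>) * real N}"
    have fA: "finite A" by (simp add: A_def)
    have split: "sum f A \<le> sum f W + sum f U + sum f L"
    proof -
      have pw: "f x \<le> (if \<bar>real x - \<mu> * real N\<bar> \<le> \<gamma> * real N then f x else 0)
          + (if real x > (\<mu> + \<gamma>) * real N then f x else 0) + (if real x < (\<mu> - \<gamma>) * real N then f x else 0)" for x
      proof -
        have "\<bar>real x - \<mu> * real N\<bar> \<le> \<gamma> * real N \<or> real x > (\<mu> + \<gamma>) * real N \<or> real x < (\<mu> - \<gamma>) * real N"
          unfolding abs_le_iff distrib_right left_diff_distrib by linarith
        moreover have "f x \<le> (if P1 then f x else 0) + (if P2 then f x else 0) + (if P3 then f x else 0)"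
          if "P1 \<or> P2 \<or> P3" for P1 P2 P3
          using that f0[of x] by (cases P1; cases P2; cases P3) simp_all
        ultimately show ?thesis by blast
      qed
      have "sum f A \<le> (\<Sum>x\<in>A. (if \<bar>real x - \<mu> * real N\<bar> \<le> \<gamma> * real N then f x else 0)
          + (if real x > (\<mu> + \<gamma>) * real N then f x else 0) + (if real x < (\<mu> - \<gamma>) * real N then f x else 0))"
        by (intro sum_mono pw)
      also have "\<dots> = sum f W + sum f U + sum f L"
        unfolding W_def U_def L_def sum.inter_filter[OF fA] by (simp add: sum.distrib)
      finally show ?thesis .
    qed
    have GA: "sum f A = PS v t ^ N"
      unfolding f_def A_def by (rule genfun_fin) (simp add: v_supp)
    have U_le: "sum f U \<le> PS v t ^ N * th1 ^ N"
    proof -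
      have "sum f U \<le> (\<Sum>x\<in>U. Z v x N * s ^ x * (t/s) powr ((\<mu> + \<gamma>) * real N))"
      proof (intro sum_mono)
        fix x assume "x \<in> U"
        then have xg: "real x \<ge> (\<mu> + \<gamma>) * real N" by (simp add: U_def)
        have "t ^ x = s ^ x * (t/s) powr real x"
          using s t by (simp add: powr_realpow power_divide)
        also have "\<dots> \<le> s ^ x * (t/s) powr ((\<mu> + \<gamma>) * real N)"
          using s t xg by (intro mult_left_mono powr_mono') (auto simp: divide_le_eq)
        finally have "t ^ x \<le> s ^ x * (t/s) powr ((\<mu> + \<gamma>) * real N)" .
        then have "Z v x N * t ^ x \<le> Z v x N * (s ^ x * (t/s) powr ((\<mu> + \<gamma>) * real N))"
          using Z_nonneg[of v x N] v_nonneg by (intro mult_left_mono) auto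
        then show "f x \<le> Z v x N * s ^ x * (t/s) powr ((\<mu> + \<gamma>) * real N)"
          unfolding f_def by (simp add: mult.assoc)
      qed
      also have "\<dots> \<le> (\<Sum>x\<in>A. Z v x N * s ^ x * (t/s) powr ((\<mu> + \<gamma>) * real N))"
        using Z_nonneg[of v] v_nonneg s t
        by (intro sum_mono2 fA) (auto simp: U_def intro!: mult_nonneg_nonneg)
      also have "\<dots> = PS v s ^ N * (t/s) powr ((\<mu> + \<gamma>) * real N)"
        unfolding A_def sum_distrib_right[symmetric] by (subst genfun_fin) (auto simp: v_supp)
      also have "(t/s) powr ((\<mu> + \<gamma>) * real N) = ((t/s) powr (\<mu> + \<gamma>)) ^ N"
      proof -
        have "(t/s) powr ((\<mu> + \<gamma>) * real N) = ((t/s) powr (\<mu> + \<gamma>)) powr real N" by (simp add: powr_powr)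
        also have "\<dots> = ((t/s) powr (\<mu> + \<gamma>)) ^ N" using s t by (intro powr_realpow) simp
        finally show ?thesis .
      qed
      also have "PS v s ^ N * ((t/s) powr (\<mu> + \<gamma>)) ^ N = (PS v t * th1) ^ N"
      proof -
        have "PS v s * (t/s) powr (\<mu> + \<gamma>) = PS v t * th1" using G0 by (simp add: th1_def)
        then show ?thesis by (metis power_mult_distrib)
      qed
      also have "(PS v t * th1) ^ N = PS v t ^ N * th1 ^ N" by (rule power_mult_distrib)
      finally show ?thesis .
    qed
    have L_le: "sum f L \<le> PS v t ^ N * th2 ^ N"
    proof -
      have "sum f L \<le> (\<Sum>x\<in>L. Z v x N * s' ^ x * (t/s') powr ((\<mu> - \<gamma>) * real N))"
      proof (intro sum_mono)
        fix x assume "x \<in> L"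
        then have xg: "real x \<le> (\<mu> - \<gamma>) * real N" by (simp add: L_def)
        have "t ^ x = s' ^ x * (t/s') powr real x"
          using s' t by (simp add: powr_realpow power_divide)
        also have "\<dots> \<le> s' ^ x * (t/s') powr ((\<mu> - \<gamma>) * real N)"
          using s' t xg by (intro mult_left_mono powr_mono) (auto simp: le_divide_eq)
        finally have "t ^ x \<le> s' ^ x * (t/s') powr ((\<mu> - \<gamma>) * real N)" .
        then have "Z v x N * t ^ x \<le> Z v x N * (s' ^ x * (t/s') powr ((\<mu> - \<gamma>) * real N))"
          using Z_nonneg[of v x N] v_nonneg by (intro mult_left_mono) auto
        then show "f x \<le> Z v x N * s' ^ x * (t/s') powr ((\<mu> - \<gamma>) * real N)"
          unfolding f_def by (simp add: mult.assoc)
      qed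
      also have "\<dots> \<le> (\<Sum>x\<in>A. Z v x N * s' ^ x * (t/s') powr ((\<mu> - \<gamma>) * real N))"
        using Z_nonneg[of v] v_nonneg s' t
        by (intro sum_mono2 fA) (auto simp: L_def intro!: mult_nonneg_nonneg)
      also have "\<dots> = PS v s' ^ N * (t/s') powr ((\<mu> - \<gamma>) * real N)"
        unfolding A_def sum_distrib_right[symmetric] by (subst genfun_fin) (auto simp: v_supp)
      also have "(t/s') powr ((\<mu> - \<gamma>) * real N) = ((t/s') powr (\<mu> - \<gamma>)) ^ N"
      proof -
        have "(t/s') powr ((\<mu> - \<gamma>) * real N) = ((t/s') powr (\<mu> - \<gamma>)) powr real N" by (simp add: powr_powr)
        also have "\<dots> = ((t/s') powr (\<mu> - \<gamma>)) ^ N" using s' t by (intro powr_realpow) simp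
        finally show ?thesis .
      qed
      also have "PS v s' ^ N * ((t/s') powr (\<mu> - \<gamma>)) ^ N = (PS v t * th2) ^ N"
      proof -
        have "PS v s' * (t/s') powr (\<mu> - \<gamma>) = PS v t * th2" using G0 by (simp add: th2_def)
        then show ?thesis by (metis power_mult_distrib)
      qed
      also have "(PS v t * th2) ^ N = PS v t ^ N * th2 ^ N" by (rule power_mult_distrib)
      finally show ?thesis .
    qed
    have GN: "PS v t ^ N > 0" using G0 by simp
    have "PS v t ^ N * th1 ^ N \<le> PS v t ^ N / 4" using N1 GN by simp
    moreover have "PS v t ^ N * th2 ^ N \<le> PS v t ^ N / 4" using N2 GN by simp
    ultimately have "PS v t ^ N / 2 \<le> sum f W" using split GA U_le L_le by linarith
    then show ?thesis by (simp add: W_def A_def f_def)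
  qed
  show ?thesis
    by (rule eventually_mono[OF eventually_conj[OF ev1 ev2]], elim conjE,
        rule main[unfolded \<mu>_def \<Psi>_def]; assumption)
qed

end

lemma pigeon:
  fixes f :: "'a \<Rightarrow> real"
  assumes "finite W" "real (card W) \<le> c" "sum f W \<ge> S" "S > 0"
  shows "\<exists>x\<in>W. f x \<ge> S / c"
proof (rule ccontr)
  assume "\<not> ?thesis"
  then have lt: "\<And>x. x \<in> W \<Longrightarrow> f x < S / c" by auto
  have "W \<noteq> {}" using assms by auto
  have c0: "c > 0"
  proof -
    have "card W > 0" using \<open>W \<noteq> {}\<close> assms(1) by (simp add: card_gt_0_iff)
    then show ?thesis using assms(2) by linarith
  qed
  have "sum f W < (\<Sum>x\<in>W. S / c)" using lt assms(1) \<open>W \<noteq> {}\<close> by (intro sum_strict_mono) auto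
  also have "\<dots> = real (card W) * (S / c)" by simp
  also have "\<dots> \<le> c * (S / c)"
    using c0 assms by (intro mult_right_mono) auto
  also have "\<dots> = S" using c0 by simp
  finally show False using assms by simp
qed

inductive rp :: "nat set \<Rightarrow> nat \<Rightarrow> nat \<Rightarrow> bool" for A where
  rp0: "rp A 0 0"
| rpz: "rp A j x \<Longrightarrow> rp A (Suc j) x"
| rpa: "rp A j x \<Longrightarrow> a \<in> A \<Longrightarrow> rp A (Suc j) (x + a)"

lemma rp_add: "rp A j' x' \<Longrightarrow> rp A j x \<Longrightarrow> rp A (j + j') (x + x')"
proof (induction rule: rp.induct)
  case rp0 then show ?case by simp
next
  case (rpz j' x') then show ?case by (simp add: rp.rpz)
next
  case (rpa j' x' a) then show ?case using rp.rpa[of A "j + j'" "x + x'" a] by (simp add: add.assoc)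
qed

lemma rp_mult: "rp A j x \<Longrightarrow> rp A (k * j) (k * x)"
proof (induction k)
  case 0 then show ?case by (simp add: rp0)
next
  case (Suc k) then show ?case using rp_add[of A j x "k*j" "k*x"] by (simp add: add.commute)
qed

lemma rp_zeros: "rp A j 0"
  by (induction j) (auto intro: rp.intros)

lemma rp_mono: "rp A j x \<Longrightarrow> j \<le> j' \<Longrightarrow> rp A j' x"
  using rp_add[OF rp_zeros[of A "j' - j"], of j x] by simp

lemma rp_single: "a \<in> A \<Longrightarrow> rp A 1 a"
  using rpa[OF rp0, of a A] by simp

lemma rp_dvd: "rp A j x \<Longrightarrow> (\<And>a. a \<in> A \<Longrightarrow> d dvd a) \<Longrightarrow> d dvd x"
  by (induction rule: rp.induct) auto

lemma rp_subset: "rp A j x \<Longrightarrow> A \<subseteq> B \<Longrightarrow> rp B j x"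
  by (induction rule: rp.induct) (auto intro: rp.intros)

lemma bezout_set:
  assumes "finite F" "F \<noteq> {}" "0 \<notin> F"
  shows "\<exists>P Q j1 j2. rp F j1 P \<and> rp F j2 Q \<and> P = Q + Gcd F"
  using assms
proof (induction F rule: finite_ne_induct)
  case (singleton a)
  have "rp {a} 1 a" by (rule rp_single) simp
  moreover have "rp {a} 0 0" by (rule rp0)
  ultimately show ?case by fastforce
next
  case (insert a F)
  then obtain P Q j1 j2 where IH: "rp F j1 P" "rp F j2 Q" "P = Q + Gcd F" by auto
  have a0: "a \<noteq> 0" using insert by auto
  obtain x y where xy: "a * x = Gcd F * y + gcd a (Gcd F)" using bezout_nat[OF a0] by blast
  have sub: "F \<subseteq> insert a F" by auto
  have r1: "rp (insert a F) (x * 1 + y * j2) (x * a + y * Q)"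
    by (rule rp_add[OF rp_mult[OF rp_subset[OF IH(2) sub]] rp_mult[OF rp_single]]) simp
  have r2: "rp (insert a F) (y * j1) (y * P)"
    by (rule rp_mult[OF rp_subset[OF IH(1) sub]])
  have "x * a + y * Q = y * P + gcd a (Gcd F)"
    using xy IH(3) by (simp add: algebra_simps)
  then show ?case using r1 r2 by (auto simp: Gcd_insert)
qed

lemma frob:
  assumes r1: "rp A j1 P" and r2: "rp A j2 Q" and PQ: "P = Q + d" and d: "d > 0"
    and dv: "\<And>a. a \<in> A \<Longrightarrow> d dvd a"
  shows "\<exists>N0. \<forall>x\<ge>N0. d dvd x \<longrightarrow> (\<exists>j. rp A j x)"
proof -
  obtain q where q: "Q = d * q" using rp_dvd[OF r2 dv] by (auto elim: dvdE)
  show ?thesis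
  proof (rule exI[of _ "q * q * d"], intro allI impI)
    fix x assume x: "q * q * d \<le> x" "d dvd x"
    then obtain k where k: "x = d * k" by (auto elim: dvdE)
    show "\<exists>j. rp A j x"
    proof (cases "q = 0")
      case True
      then have "P = d" using PQ q by simp
      then show ?thesis using rp_mult[OF r1, of k] k by (auto simp: mult.commute)
    next
      case False
      define a where "a = k div q"
      define b where "b = k mod q"
      have kab: "k = a * q + b" by (simp add: a_def b_def)
      have bq: "b < q" using False by (simp add: b_def)
      have "q * q \<le> k" using x k d by (simp add: mult.commute)
      then have "q * q div q \<le> k div q" by (rule div_le_mono)
      then have "q \<le> a" using False unfolding a_def by simp
      then have ab: "b \<le> a" using bq by simp
      have "x = (a - b) * Q + b * P"
      proof -
        have h1: "x = a * Q + b * d" using k kab q by (simp add: algebra_simps)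
        have h2: "a * Q = (a - b) * Q + b * Q" using ab by (simp add: add_mult_distrib[symmetric])
        show ?thesis using h1 h2 PQ by (simp add: algebra_simps)
      qed
      then show ?thesis using rp_add[OF rp_mult[OF r1, of b] rp_mult[OF r2, of "a - b"]] by blast
    qed
  qed
qed

lemma nt_bounded:
  assumes N0: "\<And>x. x \<ge> N0 \<Longrightarrow> d dvd x \<Longrightarrow> \<exists>j. rp A j x"
    and M: "M \<in> A" "d dvd M" "M > 0"
  shows "\<exists>C. \<forall>X j. N0 \<le> X \<longrightarrow> d dvd X \<longrightarrow> X + C * M \<le> j * M \<longrightarrow> rp A j X"
proof -
  define R where "R = {s. N0 \<le> s \<and> s < N0 + M \<and> d dvd s}"
  define J where "J s = (SOME j. rp A j s)" for s
  have fR: "finite R" unfolding R_def by (rule finite_subset[of _ "{..<N0+M}"]) auto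
  have J: "rp A (J s) s" if "s \<in> R" for s
    using N0[of s] that unfolding R_def J_def by (auto intro: someI_ex)
  define C where "C = Max (insert 0 (J ` R))"
  have JC: "J s \<le> C" if "s \<in> R" for s unfolding C_def using fR that by (intro Max_ge) auto
  show ?thesis
  proof (intro exI[of _ C] allI impI)
    fix X j assume X: "N0 \<le> X" "d dvd X" "X + C * M \<le> j * M"
    define q where "q = (X - N0) div M"
    define s where "s = X - q * M"
    have qM: "q * M \<le> X - N0" unfolding q_def by (rule div_times_less_eq_dividend)
    have e: "X - N0 = q * M + (X - N0) mod M" unfolding q_def by simp
    have "(X - N0) mod M < M" using M(3) by simp
    then have lt: "X - N0 < q * M + M" using e by linarith
    have s1: "N0 \<le> s" using qM X(1) unfolding s_def by linarith
    have s2: "s < N0 + M" using lt qM X(1) unfolding s_def by linarith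
    have "d dvd q * M" using M(2) by (rule dvd_mult)
    then have s3: "d dvd s" unfolding s_def using X(2) by (rule dvd_diff_nat[rotated])
    have sR: "s \<in> R" using s1 s2 s3 unfolding R_def by simp
    have "rp A (q * 1 + J s) (q * M + s)"
      using rp_add[OF J[OF sR] rp_mult[OF rp_single[OF M(1)], of q]] by (simp add: add.commute)
    moreover have "q * M + s = X" using qM X unfolding s_def by simp
    moreover have "q * 1 + J s \<le> j"
    proof -
      have "(q + J s) * M \<le> q * M + C * M" using JC[OF sR] by (simp add: add_mult_distrib)
      also have "\<dots> \<le> X + C * M" using qM by simp
      also have "\<dots> \<le> j * M" by fact
      finally show ?thesis using M(3) by simp
    qed
    ultimately show "rp A j X" using rp_mono by auto
  qed
qed

lemma Z_rp:
  assumes w0: "\<And>k. w k \<ge> 0" and c: "c \<ge> 0" "w 0 \<ge> c" "\<And>a. a \<in> A \<Longrightarrow> w a \<ge> c"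
    and r: "rp A j X"
  shows "Z w (x + X) (n1 + j) \<ge> c ^ j * Z w x n1"
  using r
proof (induction rule: rp.induct)
  case rp0 then show ?case by simp
next
  case (rpz j X)
  have "c * (c ^ j * Z w x n1) \<le> w 0 * Z w (x + X) (n1 + j)"
    using rpz c Z_nonneg[of w] w0 by (intro mult_mono) auto
  also have "\<dots> \<le> Z w (x + X) (Suc (n1 + j))"
    using Z_Suc_ge[OF w0, where k=0 and x="x + X" and N="n1 + j"] by simp
  finally show ?case by (simp add: mult.assoc)
next
  case (rpa j X a)
  have "c * (c ^ j * Z w x n1) \<le> w a * Z w (x + X) (n1 + j)"
    using rpa c Z_nonneg[of w] w0 by (intro mult_mono) auto
  also have "\<dots> \<le> Z w (x + (X + a)) (Suc (n1 + j))"
    using Z_Suc_ge[OF w0, where k=a and x="x + (X + a)" and N="n1 + j"] by (simp add: add.assoc[symmetric])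
  finally show ?case by (simp add: mult.assoc)
qed

lemma pow_ge_exp: assumes "p > 0" shows "p ^ n \<ge> exp (- (real n * \<bar>ln p\<bar>))"
proof -
  have "p ^ n = exp (real n * ln p)" using assms by (simp add: exp_of_nat_mult)
  moreover have "real n * (- \<bar>ln p\<bar>) \<le> real n * ln p"
  proof -
    have "- \<bar>ln p\<bar> \<le> ln p" using abs_ge_minus_self[of "ln p"] by linarith
    then show ?thesis by (rule mult_left_mono) simp
  qed
  ultimately show ?thesis by simp
qed

lemma pow_le_exp: assumes "p > 0" shows "p ^ n \<le> exp (real n * \<bar>ln p\<bar>)"
proof -
  have "p ^ n = exp (real n * ln p)" using assms by (simp add: exp_of_nat_mult)
  moreover have "real n * ln p \<le> real n * \<bar>ln p\<bar>" by (intro mult_left_mono) auto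
  ultimately show ?thesis by simp
qed

lemma LB_step:
  assumes w0: "\<And>k. w k \<ge> 0" and fv: "finw v K" and vw: "\<And>k. v k \<le> w k"
    and c: "c > 0" "c \<le> w 0" "\<And>a. a \<in> A \<Longrightarrow> c \<le> w a"
    and t: "t > 0"
    and Zx: "Z v x n1 * t ^ x \<ge> PS v t ^ n1 / (2 * (real K * real n1 + 1))"
    and r: "rp A J X" and XM: "real X \<le> real J * M"
  shows "Z w (x + X) (n1 + J) * t ^ (x + X) \<ge> PS v t ^ (n1 + J) *
          exp (- (real J * (\<bar>ln c\<bar> + M * \<bar>ln t\<bar> + \<bar>ln (PS v t)\<bar>))) / (2 * (real K * real (n1 + J) + 1))"
proof -
  interpret finw v K by fact
  define P where "P = PS v t"
  have P: "P > 0" using PS_pos[of t] v0 t by (simp add: P_def)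
  define D1 where "D1 = 2 * (real K * real n1 + 1)"
  define D where "D = 2 * (real K * real (n1 + J) + 1)"
  have kk: "real K * real n1 \<le> real K * real (n1 + J)" by (intro mult_left_mono) auto
  have kk0: "real K * real n1 \<ge> 0" by simp
  have "0 < real K * real n1 + 1" using kk0 by linarith
  then have D1a: "D1 > 0" unfolding D1_def by simp
  have D1b: "D1 \<le> D" unfolding D1_def D_def using kk by simp
  note D1 = D1a D1b
  have h1: "Z w (x + X) (n1 + J) \<ge> c ^ J * Z v x n1"
  proof -
    have "Z w (x + X) (n1 + J) \<ge> c ^ J * Z w x n1" by (rule Z_rp[of w c A J X x n1]) (use w0 c r in auto)
    moreover have "Z v x n1 \<le> Z w x n1" by (rule Z_mono_w) (use v_nonneg vw in auto)
    moreover have "c ^ J * Z v x n1 \<le> c ^ J * Z w x n1"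
      using \<open>Z v x n1 \<le> Z w x n1\<close> c(1) by (intro mult_left_mono) auto
    ultimately show ?thesis by linarith
  qed
  have e1: "c ^ J \<ge> exp (- (real J * \<bar>ln c\<bar>))" by (rule pow_ge_exp[OF c(1)])
  have e2: "t ^ X \<ge> exp (- (real J * M * \<bar>ln t\<bar>))"
  proof -
    have "real X * \<bar>ln t\<bar> \<le> real J * M * \<bar>ln t\<bar>" using XM by (intro mult_right_mono) auto
    then have "exp (- (real J * M * \<bar>ln t\<bar>)) \<le> exp (- (real X * \<bar>ln t\<bar>))" by simp
    also have "\<dots> \<le> t ^ X" by (rule pow_ge_exp[OF t])
    finally show ?thesis .
  qed
  have e3: "P ^ n1 \<ge> P ^ (n1 + J) * exp (- (real J * \<bar>ln P\<bar>))"
  proof -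
    have "P ^ J * exp (- (real J * \<bar>ln P\<bar>)) \<le> exp (real J * \<bar>ln P\<bar>) * exp (- (real J * \<bar>ln P\<bar>))"
      using pow_le_exp[OF P, of J] by (intro mult_right_mono) auto
    also have "\<dots> = 1" by (simp flip: exp_add)
    finally have "P ^ J * exp (- (real J * \<bar>ln P\<bar>)) \<le> 1" .
    then have "P ^ n1 * (P ^ J * exp (- (real J * \<bar>ln P\<bar>))) \<le> P ^ n1 * 1"
      using P by (intro mult_left_mono) auto
    then show ?thesis by (simp add: power_add mult.assoc)
  qed
  define E where "E = exp (- (real J * (\<bar>ln c\<bar> + M * \<bar>ln t\<bar> + \<bar>ln P\<bar>)))"
  have Eeq: "E = exp (- (real J * \<bar>ln c\<bar>)) * exp (- (real J * M * \<bar>ln t\<bar>)) * exp (- (real J * \<bar>ln P\<bar>))"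
    unfolding E_def by (simp add: algebra_simps flip: exp_add)
  have "Z w (x + X) (n1 + J) * t ^ (x + X) = Z w (x + X) (n1 + J) * t ^ x * t ^ X"
    by (simp add: power_add mult.assoc)
  also have "\<dots> \<ge> c ^ J * Z v x n1 * t ^ x * t ^ X"
    using h1 t by (intro mult_right_mono) auto
  finally have s1: "Z w (x + X) (n1 + J) * t ^ (x + X) \<ge> c ^ J * t ^ X * (Z v x n1 * t ^ x)"
    by (simp add: algebra_simps)
  have "c ^ J * t ^ X * (Z v x n1 * t ^ x) \<ge> c ^ J * t ^ X * (P ^ n1 / D1)"
    using Zx c t by (intro mult_left_mono) (auto simp: P_def D1_def)
  moreover have "c ^ J * t ^ X * (P ^ n1 / D1) \<ge>
      exp (- (real J * \<bar>ln c\<bar>)) * exp (- (real J * M * \<bar>ln t\<bar>)) * (P ^ (n1 + J) * exp (- (real J * \<bar>ln P\<bar>)) / D1)"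
    using e1 e2 e3 D1 P c(1) t by (intro mult_mono divide_right_mono) auto
  moreover have "exp (- (real J * \<bar>ln c\<bar>)) * exp (- (real J * M * \<bar>ln t\<bar>)) * (P ^ (n1 + J) * exp (- (real J * \<bar>ln P\<bar>)) / D1)
      = P ^ (n1 + J) * E / D1" by (simp add: Eeq)
  moreover have "P ^ (n1 + J) * E / D1 \<ge> P ^ (n1 + J) * E / D"
    using D1 P by (intro divide_left_mono) (auto simp: E_def)
  ultimately have "P ^ (n1 + J) * E / D \<le> Z w (x + X) (n1 + J) * t ^ (x + X)" using s1 by linarith
  then show ?thesis by (simp only: E_def D_def P_def)
qed

lemma expo_ev:
  fixes \<delta> :: real and K :: nat assumes "\<delta> > 0"
  shows "\<forall>\<^sub>F x in at_top. 2 * (real K * x + 1) \<le> exp (\<delta> * x)"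
  using assms by real_asymp

lemma den_pos: "0 < 2 * (real K * real n + 1)"
proof -
  have "0 \<le> real K * real n" by simp
  then have "0 < real K * real n + 1" by linarith
  then show ?thesis by simp
qed

lemma LB:
  fixes w v :: "nat \<Rightarrow> real" and A :: "nat set" and mm nn :: "nat \<Rightarrow> nat"
  assumes w0: "\<And>k. w k \<ge> 0" and fv: "finw v K" and vw: "\<And>k. v k \<le> w k"
    and vd: "\<And>k. v k \<noteq> 0 \<Longrightarrow> d dvd k"
    and rpA: "\<And>X j. N0 \<le> X \<Longrightarrow> d dvd X \<Longrightarrow> X + C * M \<le> j * M \<Longrightarrow> rp A j X"
    and c: "c > 0" "c \<le> w 0" "\<And>a. a \<in> A \<Longrightarrow> c \<le> w a"
    and M: "M > 0" and t: "t > 0"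
    and nn: "filterlim nn at_top sequentially"
    and lim: "(\<lambda>j. real (mm j) / real (nn j)) \<longlonglongrightarrow> lam"
    and dm: "\<forall>\<^sub>F j in sequentially. d dvd mm j"
    and eta: "0 < \<eta>" "\<eta> < 1"
    and mu1: "\<bar>lam - PS1 v t / PS v t\<bar> < \<eta> * (PS1 v t / PS v t)"
    and mu2: "\<bar>lam - PS1 v t / PS v t\<bar> < \<eta> * (real M - PS1 v t / PS v t)"
    and dl: "\<delta> > 0"
  shows "\<forall>\<^sub>F j in sequentially. Z w (mm j) (nn j) * t ^ (mm j) \<ge>
     PS v t ^ (nn j) * exp (- ((\<eta> * (\<bar>ln c\<bar> + real M * \<bar>ln t\<bar> + \<bar>ln (PS v t)\<bar>) + \<delta>) * real (nn j)))"
proof -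
  interpret finw v K by fact
  define \<mu> where "\<mu> = PS1 v t / PS v t"
  define P where "P = PS v t"
  define L where "L = \<bar>ln c\<bar> + real M * \<bar>ln t\<bar> + \<bar>ln P\<bar>"
  have P: "P > 0" using PS_pos[of t] v0 t by (simp add: P_def)
  have mu0: "\<mu> \<ge> 0" using PS1_nonneg[of t] P t by (simp add: \<mu>_def P_def)
  have L0: "L \<ge> 0" by (simp add: L_def)
  define a where "a = \<eta> * \<mu>"
  define b where "b = \<bar>lam - \<mu>\<bar>"
  define e where "e = \<eta> * (real M - \<mu>)"
  define \<kappa> where "\<kappa> = min (a - b) (e - b)"
  have \<kappa>: "\<kappa> > 0" using mu1 mu2 by (simp add: \<kappa>_def a_def b_def e_def \<mu>_def)
  define \<gamma> where "\<gamma> = \<kappa> / 8"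
  have \<gamma>: "\<gamma> > 0" using \<kappa> by (simp add: \<gamma>_def)
  have Mmu: "real M - \<mu> > 0"
  proof -
    have "0 < \<eta> * (real M - \<mu>)" using mu2 abs_ge_zero[of "lam - PS1 v t / PS v t"] unfolding \<mu>_def by linarith
    then show ?thesis using eta by (simp add: zero_less_mult_iff)
  qed
  define Jf where "Jf n = nat \<lfloor>\<eta> * real n\<rfloor>" for n :: nat
  have Jf_eq: "real (Jf n) = of_int \<lfloor>\<eta> * real n\<rfloor>" for n
    using eta by (simp add: Jf_def)
  have Jf1: "real (Jf n) \<le> \<eta> * real n" for n by (simp add: Jf_eq)
  have Jf2: "real (Jf n) > \<eta> * real n - 1" for n by (simp add: Jf_eq)
  have Jf3: "Jf n \<le> n" for n
  proof -
    have "\<eta> * real n \<le> real n" using eta by (intro mult_left_le_one_le) auto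
    then show ?thesis using Jf1[of n] by linarith
  qed
  from window[OF t \<gamma>] obtain N1 where N1: "\<And>N. N \<ge> N1 \<Longrightarrow> P ^ N / 2 \<le>
     (\<Sum>x\<in>{x\<in>{..K*N}. \<bar>real x - \<mu> * real N\<bar> \<le> \<gamma> * real N}. Z v x N * t ^ x)"
    unfolding eventually_sequentially \<mu>_def P_def by blast
  have rn: "filterlim (\<lambda>j. real (nn j)) at_top sequentially"
    by (rule filterlim_compose[OF filterlim_real_sequentially nn])
  have big: "\<forall>\<^sub>F j in sequentially. B \<le> real (nn j)" for B
    using rn by (simp add: filterlim_at_top)
  have ex: "\<forall>\<^sub>F j in sequentially. 2 * (real K * real (nn j) + 1) \<le> exp (\<delta> * real (nn j))"
    using filterlim_iff[THEN iffD1, OF rn, rule_format, OF expo_ev[OF dl, of K]] by simp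
  have ml: "\<forall>\<^sub>F j in sequentially. \<bar>real (mm j) / real (nn j) - lam\<bar> < \<gamma>"
    using tendstoD[OF lim \<gamma>] by (simp add: dist_real_def)
  define B1 where "B1 = (real N0 + \<mu>) / (6 * \<gamma>)"
  define B2 where "B2 = (real C * real M + real M) / (6 * \<gamma>)"
  define B3 where "B3 = real N1 / (1 - \<eta>)"
  have pw: "Z w (mm j) (nn j) * t ^ (mm j) \<ge> P ^ (nn j) * exp (- ((\<eta> * L + \<delta>) * real (nn j)))"
    if H1: "\<bar>real (mm j) / real (nn j) - lam\<bar> < \<gamma>" and H2: "d dvd mm j"
      and H3: "B1 \<le> real (nn j)" and H4: "B2 \<le> real (nn j)" and H5: "B3 \<le> real (nn j)"
      and H6: "1 \<le> real (nn j)"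
      and H7: "2 * (real K * real (nn j) + 1) \<le> exp (\<delta> * real (nn j))" for j
  proof -
    define n where "n = nn j"
    define m where "m = mm j"
    define J where "J = Jf n"
    define n1 where "n1 = n - J"
    have Jn: "J \<le> n" by (simp add: J_def Jf3)
    have n1r: "real n1 = real n - real J" using Jn by (simp add: n1_def)
    have npos: "real n > 0" using H6 by (simp add: n_def)
    have "real n1 \<ge> (1 - \<eta>) * real n" using Jf1[of n] n1r by (simp add: J_def algebra_simps)
    moreover have "(1 - \<eta>) * real n \<ge> (1 - \<eta>) * B3" using H5 eta by (intro mult_left_mono) (auto simp: n_def)
    moreover have "(1 - \<eta>) * B3 = real N1" using eta by (simp add: B3_def)
    ultimately have "N1 \<le> n1" by linarith
    note win = N1[OF this]
    define W where "W = {x\<in>{..K*n1}. \<bar>real x - \<mu> * real n1\<bar> \<le> \<gamma> * real n1}"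
    have fW: "finite W" by (simp add: W_def)
    have cW: "real (card W) \<le> real K * real n1 + 1"
    proof -
      have "card W \<le> card {..K*n1}" unfolding W_def by (intro card_mono) auto
      then have c1: "card W \<le> K * n1 + 1" by simp
      have "real (card W) \<le> real (K * n1 + 1)" using c1 by (simp only: of_nat_le_iff)
      then show ?thesis by simp
    qed
    have Pn1: "P ^ n1 / 2 > 0" using P by simp
    obtain x where xW: "x \<in> W" and xZ: "Z v x n1 * t ^ x \<ge> (P ^ n1 / 2) / (real K * real n1 + 1)"
      using pigeon[OF fW cW _ Pn1] win unfolding W_def by blast
    have Zx: "Z v x n1 * t ^ x \<ge> PS v t ^ n1 / (2 * (real K * real n1 + 1))"
      using xZ by (simp add: P_def mult.commute)
    have "Z v x n1 \<noteq> 0"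
    proof
      assume "Z v x n1 = 0"
      then have "PS v t ^ n1 / (2 * (real K * real n1 + 1)) \<le> 0" using Zx by simp
      moreover have "PS v t ^ n1 / (2 * (real K * real n1 + 1)) > 0"
        using P den_pos[of K n1] by (simp add: P_def)
      ultimately show False by simp
    qed
    then have dx: "d dvd x" by (intro Z_dvd[of v d x n1] vd)
    have xb: "\<bar>real x - \<mu> * real n1\<bar> \<le> \<gamma> * real n1" using xW by (simp add: W_def)
    have mb: "\<bar>real m - lam * real n\<bar> < \<gamma> * real n"
    proof -
      have "\<bar>real m / real n - lam\<bar> * real n < \<gamma> * real n"
        using H1 npos by (simp add: m_def n_def)
      moreover have "\<bar>real m / real n - lam\<bar> * real n = \<bar>real m - lam * real n\<bar>"
        using npos by (simp add: abs_mult[symmetric] field_simps)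
      ultimately show ?thesis by simp
    qed
    have g1: "\<gamma> * real n1 \<le> \<gamma> * real n" using \<gamma> n1r by (intro mult_left_mono) auto
    have mun1: "\<mu> * real n1 = \<mu> * real n - \<mu> * real J" by (simp add: n1r algebra_simps)
    have a3: "\<mu> * real J \<ge> a * real n - \<mu>"
    proof -
      have "\<mu> * (\<eta> * real n - 1) \<le> \<mu> * real J" using Jf2[of n] mu0 by (intro mult_left_mono) (auto simp: J_def)
      then show ?thesis by (simp add: a_def algebra_simps)
    qed
    have a4: "lam * real n - \<mu> * real n \<ge> - (b * real n)"
    proof -
      have "- b \<le> lam - \<mu>" by (simp add: b_def)
      then have "- b * real n \<le> (lam - \<mu>) * real n" using npos by (intro mult_right_mono) auto
      then show ?thesis by (simp add: algebra_simps)
    qed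
    have a5: "\<kappa> * real n \<le> a * real n - b * real n"
    proof -
      have "\<kappa> \<le> a - b" by (simp add: \<kappa>_def)
      then have "\<kappa> * real n \<le> (a - b) * real n" using npos by (intro mult_right_mono) auto
      then show ?thesis by (simp add: algebra_simps)
    qed
    have kg: "\<kappa> * real n = 8 * (\<gamma> * real n)" by (simp add: \<gamma>_def)
    have a6: "6 * (\<gamma> * real n) \<ge> real N0 + \<mu>"
    proof -
      have "(6 * \<gamma>) * B1 \<le> (6 * \<gamma>) * real n" using H3 \<gamma> by (intro mult_left_mono) (auto simp: n_def)
      moreover have "(6 * \<gamma>) * B1 = real N0 + \<mu>" using \<gamma> by (simp add: B1_def)
      ultimately show ?thesis by (simp add: mult.assoc)
    qed
    have u3: "real J * real M - \<mu> * real J \<ge> e * real n - (real M - \<mu>)"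
    proof -
      have "(real M - \<mu>) * (\<eta> * real n - 1) \<le> (real M - \<mu>) * real J"
        using Jf2[of n] Mmu by (intro mult_left_mono) (auto simp: J_def)
      then show ?thesis by (simp add: e_def algebra_simps)
    qed
    have u4: "lam * real n - \<mu> * real n \<le> b * real n"
    proof -
      have "lam - \<mu> \<le> b" by (simp add: b_def)
      then have "(lam - \<mu>) * real n \<le> b * real n" using npos by (intro mult_right_mono) auto
      then show ?thesis by (simp add: algebra_simps)
    qed
    have u5: "\<kappa> * real n \<le> e * real n - b * real n"
    proof -
      have "\<kappa> \<le> e - b" by (simp add: \<kappa>_def)
      then have "\<kappa> * real n \<le> (e - b) * real n" using npos by (intro mult_right_mono) auto
      then show ?thesis by (simp add: algebra_simps)
    qed
    have u6: "6 * (\<gamma> * real n) \<ge> real C * real M + real M"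
    proof -
      have "(6 * \<gamma>) * B2 \<le> (6 * \<gamma>) * real n" using H4 \<gamma> by (intro mult_left_mono) (auto simp: n_def)
      moreover have "(6 * \<gamma>) * B2 = real C * real M + real M" using \<gamma> by (simp add: B2_def)
      ultimately show ?thesis by (simp add: mult.assoc)
    qed
    have m1: "real m \<ge> lam * real n - \<gamma> * real n" "real m \<le> lam * real n + \<gamma> * real n"
      using mb by (simp_all add: abs_less_iff)
    have x1: "real x \<le> \<mu> * real n1 + \<gamma> * real n1" "real x \<ge> \<mu> * real n1 - \<gamma> * real n1"
      using xb by (simp_all add: abs_le_iff)
    have lowX: "real m - real x \<ge> real N0"
      using m1(1) x1(1) g1 mun1 a3 a4 a5 kg a6 by linarith
    have upX: "real m - real x + real C * real M \<le> real J * real M"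
      using m1(2) x1(2) g1 mun1 u3 u4 u5 kg u6 mu0 by linarith
    have xm: "x \<le> m" using lowX by simp
    define X where "X = m - x"
    have Xr: "real X = real m - real x" using xm by (simp add: X_def)
    have XN0: "N0 \<le> X" using lowX Xr by simp
    have XCM: "X + C * M \<le> J * M"
    proof -
      have "real (X + C * M) \<le> real (J * M)" using upX Xr by simp
      then show ?thesis by (simp only: of_nat_le_iff)
    qed
    have dX: "d dvd X" unfolding X_def using H2 dx by (simp add: m_def dvd_diff_nat)
    have r: "rp A J X" by (rule rpA[OF XN0 dX XCM])
    have XM: "real X \<le> real J * real M"
    proof -
      have "X \<le> J * M" using XCM by simp
      then show ?thesis by (simp flip: of_nat_mult)
    qed
    have step: "Z w (x + X) (n1 + J) * t ^ (x + X) \<ge> PS v t ^ (n1 + J) *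
          exp (- (real J * (\<bar>ln c\<bar> + real M * \<bar>ln t\<bar> + \<bar>ln (PS v t)\<bar>))) / (2 * (real K * real (n1 + J) + 1))"
      by (rule LB_step[OF w0 fv vw c t Zx r XM])
    have xX: "x + X = m" using xm by (simp add: X_def)
    have nJ: "n1 + J = n" using Jn by (simp add: n1_def)
    have step2: "Z w m n * t ^ m \<ge> P ^ n * exp (- (real J * L)) / (2 * (real K * real n + 1))"
      using step unfolding xX nJ by (simp add: P_def L_def)
    have D: "2 * (real K * real n + 1) > 0" by (rule den_pos)
    have "exp (- ((\<eta> * L + \<delta>) * real n)) = exp (- (\<eta> * real n * L)) * exp (- (\<delta> * real n))"
      by (simp add: algebra_simps flip: exp_add)
    also have "\<dots> \<le> exp (- (real J * L)) / (2 * (real K * real n + 1))"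
    proof -
      have "real J * L \<le> \<eta> * real n * L" using Jf1[of n] L0 by (intro mult_right_mono) (auto simp: J_def)
      then have "exp (- (\<eta> * real n * L)) \<le> exp (- (real J * L))" by simp
      moreover have "exp (- (\<delta> * real n)) \<le> 1 / (2 * (real K * real n + 1))"
      proof -
        have "exp (- (\<delta> * real n)) * (2 * (real K * real n + 1)) \<le> exp (- (\<delta> * real n)) * exp (\<delta> * real n)"
          using H7 by (intro mult_left_mono) (auto simp: n_def)
        also have "\<dots> = 1" by (simp flip: exp_add)
        finally show ?thesis using D by (simp add: field_simps)
      qed
      ultimately have "exp (- (\<eta> * real n * L)) * exp (- (\<delta> * real n)) \<le> exp (- (real J * L)) * (1 / (2 * (real K * real n + 1)))"
        by (intro mult_mono) auto
      then show ?thesis by simp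
    qed
    finally have "P ^ n * exp (- ((\<eta> * L + \<delta>) * real n)) \<le> P ^ n * (exp (- (real J * L)) / (2 * (real K * real n + 1)))"
      using P by (intro mult_left_mono) auto
    then show ?thesis using step2 by (simp add: m_def n_def)
  qed
  have "\<forall>\<^sub>F j in sequentially. \<bar>real (mm j) / real (nn j) - lam\<bar> < \<gamma> \<and> d dvd mm j \<and>
      B1 \<le> real (nn j) \<and> B2 \<le> real (nn j) \<and> B3 \<le> real (nn j) \<and> 1 \<le> real (nn j) \<and>
      2 * (real K * real (nn j) + 1) \<le> exp (\<delta> * real (nn j))"
    by (intro eventually_conj ml dm big ex)
  then show ?thesis
    by (rule eventually_mono) (elim conjE, rule pw[unfolded P_def L_def]; assumption)
qed

lemma Zg_upper:
  assumes f0: "\<And>i k. f i k \<ge> 0" and u: "u > 0"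
  shows "Zg f x N \<le> (\<Prod>i<N. \<Sum>k\<le>x. f i k * u ^ k) / u ^ x"
proof (induction N arbitrary: x)
  case 0 then show ?case using u by (simp add: Zg_0)
next
  case (Suc N)
  define Pr where "Pr = (\<Prod>i<N. \<Sum>k\<le>x. f i k * u ^ k)"
  have "Zg f x (Suc N) = (\<Sum>k\<le>x. f N k * Zg f (x-k) N)" by (rule Zg_Suc)
  also have "\<dots> \<le> (\<Sum>k\<le>x. f N k * (Pr * u ^ k / u ^ x))"
  proof (intro sum_mono mult_left_mono f0)
    fix k assume k: "k \<in> {..x}"
    have "Zg f (x-k) N \<le> (\<Prod>i<N. \<Sum>k'\<le>x-k. f i k' * u ^ k') / u ^ (x-k)" by (rule Suc.IH)
    also have "(\<Prod>i<N. \<Sum>k'\<le>x-k. f i k' * u ^ k') \<le> Pr"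
      unfolding Pr_def using f0 u
      by (intro prod_mono conjI sum_nonneg sum_mono2) (auto intro!: mult_nonneg_nonneg)
    then have "(\<Prod>i<N. \<Sum>k'\<le>x-k. f i k' * u ^ k') / u ^ (x-k) \<le> Pr / u ^ (x - k)"
      using u by (intro divide_right_mono) auto
    also have "Pr / u ^ (x - k) = Pr * u ^ k / u ^ x"
    proof -
      have "u ^ x = u ^ k * u ^ (x - k)" using k by (simp flip: power_add)
      then show ?thesis using u by (simp add: field_simps)
    qed
    finally show "Zg f (x-k) N \<le> Pr * u ^ k / u ^ x" .
  qed
  also have "\<dots> = (\<Sum>k\<le>x. (f N k * u ^ k) * (Pr / u ^ x))"
    by (intro sum.cong refl) (simp add: algebra_simps)
  also have "\<dots> = (\<Sum>k\<le>x. f N k * u ^ k) * (Pr / u ^ x)"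
    by (rule sum_distrib_right[symmetric])
  also have "\<dots> = (\<Sum>k\<le>x. f N k * u ^ k) * Pr / u ^ x" by simp
  also have "\<dots> = (\<Prod>i<Suc N. \<Sum>k\<le>x. f i k * u ^ k) / u ^ x"
    by (simp add: Pr_def mult.commute)
  finally show ?case .
qed

lemma num_bound:
  fixes w :: "nat \<Rightarrow> real"
  assumes w0: "\<And>k. w k \<ge> 0" and u: "u > 0" and su: "summable (\<lambda>k. w k * u ^ k)"
    and n: "n > 0"
    and T: "(\<Sum>k\<in>{k\<in>{..m}. e < real k}. w k * u ^ k) \<le> T"
  shows "(\<Sum>y\<in>{y\<in>boxes m n. e < real (Ymax n y)}. wt w n y) \<le> real n * T * PS w u ^ (n - 1) / u ^ m"
proof -
  define S where "S = {y\<in>boxes m n. e < real (Ymax n y)}"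
  define h where "h i y = (if e < real (y i) then wt w n y else 0)" for i y
  have wt0: "wt w n y \<ge> 0" for y unfolding wt_def using w0 by (intro prod_nonneg) auto
  have h0: "h i y \<ge> 0" for i y using wt0 by (simp add: h_def)
  have fin: "finite (boxes m n)" by (rule finite_boxes)
  have step1: "(\<Sum>y\<in>S. wt w n y) \<le> (\<Sum>y\<in>boxes m n. \<Sum>i<n. h i y)"
  proof -
    have "(\<Sum>y\<in>S. wt w n y) \<le> (\<Sum>y\<in>S. \<Sum>i<n. h i y)"
    proof (intro sum_mono)
      fix y assume yS: "y \<in> S"
      have ne: "y ` {..<n} \<noteq> {}" using n by auto
      have "Ymax n y \<in> y ` {..<n}" unfolding Ymax_def using ne by (intro Max_in) auto
      then obtain i where i: "i < n" "y i = Ymax n y" by auto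
      then have "h i y = wt w n y" using yS by (simp add: h_def S_def)
      moreover have "h i y \<le> (\<Sum>i<n. h i y)" using i h0 by (intro member_le_sum) auto
      ultimately show "wt w n y \<le> (\<Sum>i<n. h i y)" by simp
    qed
    also have "\<dots> \<le> (\<Sum>y\<in>boxes m n. \<Sum>i<n. h i y)"
      using fin h0 by (intro sum_mono2) (auto simp: S_def intro!: sum_nonneg)
    finally show ?thesis .
  qed
  also have "\<dots> = (\<Sum>i<n. \<Sum>y\<in>boxes m n. h i y)" by (rule sum.swap)
  also have "\<dots> \<le> (\<Sum>i<n. T * PS w u ^ (n - 1) / u ^ m)"
  proof (intro sum_mono)
    fix i assume i: "i \<in> {..<n}"
    define f where "f j k = (if j = i \<and> \<not> e < real k then 0 else w k)" for j k
    have f0: "f j k \<ge> 0" for j k using w0 by (simp add: f_def)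
    have "(\<Sum>y\<in>boxes m n. h i y) = Zg f m n"
      unfolding Zg_def
    proof (intro sum.cong refl)
      fix y
      show "h i y = (\<Prod>j<n. f j (y j))"
      proof (cases "e < real (y i)")
        case True
        then have "(\<Prod>j<n. f j (y j)) = (\<Prod>j<n. w (y j))" by (intro prod.cong) (auto simp: f_def)
        then show ?thesis using True by (simp add: h_def wt_def)
      next
        case False
        then have "f i (y i) = 0" by (simp add: f_def)
        then have "(\<Prod>j<n. f j (y j)) = 0" using i by (intro prod_zero) auto
        then show ?thesis using False by (simp add: h_def)
      qed
    qed
    also have "\<dots> \<le> (\<Prod>j<n. \<Sum>k\<le>m. f j k * u ^ k) / u ^ m" by (rule Zg_upper[OF f0 u])
    also have "(\<Prod>j<n. \<Sum>k\<le>m. f j k * u ^ k) \<le> (\<Prod>j<n. if j = i then T else PS w u)"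
    proof (intro prod_mono conjI)
      fix j assume j: "j \<in> {..<n}"
      show "0 \<le> (\<Sum>k\<le>m. f j k * u ^ k)" using f0 u by (intro sum_nonneg) auto
      show "(\<Sum>k\<le>m. f j k * u ^ k) \<le> (if j = i then T else PS w u)"
      proof (cases "j = i")
        case True
        have "(\<Sum>k\<le>m. f j k * u ^ k) = (\<Sum>k\<le>m. if e < real k then w k * u ^ k else 0)"
          using True by (intro sum.cong) (auto simp: f_def)
        also have "\<dots> = (\<Sum>k\<in>{k\<in>{..m}. e < real k}. w k * u ^ k)"
          by (rule sum.inter_filter[symmetric]) simp
        finally show ?thesis using T True by simp
      next
        case False
        have "(\<Sum>k\<le>m. f j k * u ^ k) = (\<Sum>k<Suc m. w k * u ^ k)"
          using False by (intro sum.cong) (auto simp: f_def)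
        also have "\<dots> \<le> PS w u" unfolding PS_def
          using su w0 u by (intro sum_le_suminf) auto
        finally show ?thesis using False by simp
      qed
    qed
    then have "(\<Prod>j<n. \<Sum>k\<le>m. f j k * u ^ k) / u ^ m \<le> (\<Prod>j<n. if j = i then T else PS w u) / u ^ m"
      using u by (intro divide_right_mono) auto
    also have "(\<Prod>j<n. if j = i then T else PS w u) = T * PS w u ^ (n - 1)"
    proof -
      have "(\<Prod>j<n. if j = i then T else PS w u) = (if i \<in> {..<n} then T else 1) * PS w u ^ card ({..<n} - {i})"
        by (subst prod.If_cases) (auto simp: prod_constant Diff_eq)
      also have "card ({..<n} - {i}) = n - 1" using i by simp
      finally show ?thesis using i by simp
    qed
    finally show "(\<Sum>y\<in>boxes m n. h i y) \<le> T * PS w u ^ (n - 1) / u ^ m" .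
  qed
  also have "\<dots> = real n * T * PS w u ^ (n - 1) / u ^ m" by simp
  finally show ?thesis by (simp add: S_def)
qed

lemma exp_combine:
  fixes A1 A2 A3 A4 A5 A6 n Cq :: real
  shows "n * Cq * exp A1 * exp A2 / exp A3 / (exp A4 * exp (- A5) / exp A6) =
         n * Cq * exp (A1 + A2 - A3 - A4 + A5 + A6)"
  by (simp add: exp_add exp_diff exp_minus field_simps)

lemma xexp_lim:
  fixes r :: real assumes "r > 0"
  shows "((\<lambda>x. x * exp (- (r * x))) \<longlongrightarrow> 0) at_top"
  using assms by real_asymp

lemma combine:
  fixes w :: "nat \<Rightarrow> real" and mm nn :: "nat \<Rightarrow> nat"
  assumes w0: "\<And>k. w k \<ge> 0" and w00: "w 0 > 0"
    and u: "u > 0" and su: "summable (\<lambda>k. w k * u ^ k)"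
    and t: "t > 0" and P: "P > 0"
    and q: "0 < q" "q < 1" and Cq: "Cq \<ge> 0"
    and nn: "filterlim nn at_top sequentially"
    and tail: "\<forall>\<^sub>F j in sequentially. (\<Sum>k\<in>{k\<in>{..mm j}. \<epsilon> * real (nn j) < real k}. w k * u ^ k)
                  \<le> Cq * q powr (\<epsilon> * real (nn j))"
    and lb: "\<forall>\<^sub>F j in sequentially. Z w (mm j) (nn j) * t ^ (mm j) \<ge> P ^ (nn j) * exp (- (a * real (nn j)))"
    and ex: "\<forall>\<^sub>F j in sequentially.
        ln (PS w u) - ln P + real (mm j) / real (nn j) * (ln t - ln u) + a + \<epsilon> * ln q \<le> - r"
    and r: "r > 0"
  shows "(\<lambda>j. Pbb w (mm j) (nn j) (\<lambda>y. real (Ymax (nn j) y) > \<epsilon> * real (nn j))) \<longlonglongrightarrow> 0"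
proof -
  define \<Phi> where "\<Phi> = PS w u"
  have \<Phi>: "\<Phi> > 0"
  proof -
    have "(\<Sum>k<1. w k * u ^ k) \<le> PS w u" unfolding PS_def
      using su w0 u by (intro sum_le_suminf) auto
    then show ?thesis using w00 by (simp add: \<Phi>_def)
  qed
  have rn: "filterlim (\<lambda>j. real (nn j)) at_top sequentially"
    by (rule filterlim_compose[OF filterlim_real_sequentially nn])
  have n1: "\<forall>\<^sub>F j in sequentially. 1 \<le> real (nn j)" using rn[unfolded filterlim_at_top] by blast
  define g where "g j = Cq / \<Phi> * (real (nn j) * exp (- (r * real (nn j))))" for j
  have pw: "Pbb w (mm j) (nn j) (\<lambda>y. real (Ymax (nn j) y) > \<epsilon> * real (nn j)) \<le> g j"
    if T: "(\<Sum>k\<in>{k\<in>{..mm j}. \<epsilon> * real (nn j) < real k}. w k * u ^ k) \<le> Cq * q powr (\<epsilon> * real (nn j))"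
      and L: "Z w (mm j) (nn j) * t ^ (mm j) \<ge> P ^ (nn j) * exp (- (a * real (nn j)))"
      and E: "ln (PS w u) - ln P + real (mm j) / real (nn j) * (ln t - ln u) + a + \<epsilon> * ln q \<le> - r"
      and N: "1 \<le> real (nn j)" for j
  proof -
    define n where "n = nn j"
    define m where "m = mm j"
    have npos: "n > 0" using N by (simp add: n_def)
    define Num where "Num = (\<Sum>y\<in>{y\<in>boxes m n. \<epsilon> * real n < real (Ymax n y)}. wt w n y)"
    define T where "T = Cq * q powr (\<epsilon> * real n)"
    have num: "Num \<le> real n * T * \<Phi> ^ (n - 1) / u ^ m"
      unfolding Num_def \<Phi>_def by (rule num_bound[OF w0 u su npos]) (use T in \<open>simp add: T_def m_def n_def\<close>)
    have wt0: "wt w n y \<ge> 0" for y unfolding wt_def using w0 by (intro prod_nonneg) auto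
    have Num0: "Num \<ge> 0" unfolding Num_def using wt0 by (intro sum_nonneg) auto
    define D where "D = P ^ n * exp (- (a * real n)) / t ^ m"
    have D0: "D > 0" using P t by (simp add: D_def)
    have ZD: "Z w m n \<ge> D"
      using L t by (simp add: D_def m_def n_def pos_divide_le_eq)
    have "Pbb w m n (\<lambda>y. real (Ymax n y) > \<epsilon> * real n) = Num / Z w m n"
      by (simp add: Pbb_def Num_def)
    also have "\<dots> \<le> Num / D" using Num0 D0 ZD by (intro divide_left_mono) auto
    also have "\<dots> \<le> (real n * T * \<Phi> ^ (n - 1) / u ^ m) / D"
      using num D0 by (intro divide_right_mono) auto
    also have "(real n * T * \<Phi> ^ (n - 1) / u ^ m) / D =
        real n * Cq * exp ((\<epsilon> * real n) * ln q) * exp (real (n - 1) * ln \<Phi>) / exp (real m * ln u) /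
          (exp (real n * ln P) * exp (- (a * real n)) / exp (real m * ln t))"
    proof -
      have "q powr (\<epsilon> * real n) = exp ((\<epsilon> * real n) * ln q)" using q by (simp add: powr_def mult.commute)
      moreover have "\<Phi> ^ (n - 1) = exp (real (n - 1) * ln \<Phi>)" using \<Phi> by (simp add: exp_of_nat_mult)
      moreover have "u ^ m = exp (real m * ln u)" using u by (simp add: exp_of_nat_mult)
      moreover have "P ^ n = exp (real n * ln P)" using P by (simp add: exp_of_nat_mult)
      moreover have "t ^ m = exp (real m * ln t)" using t by (simp add: exp_of_nat_mult)
      ultimately show ?thesis by (simp add: D_def T_def mult.assoc)
    qed
    also have "\<dots> = real n * Cq * exp ((\<epsilon> * real n) * ln q + real (n - 1) * ln \<Phi> - real m * ln u
                  - real n * ln P + a * real n + real m * ln t)"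
      by (rule exp_combine)
    also have "(\<epsilon> * real n) * ln q + real (n - 1) * ln \<Phi> - real m * ln u - real n * ln P + a * real n + real m * ln t
        = real n * (ln \<Phi> - ln P + real m / real n * (ln t - ln u) + a + \<epsilon> * ln q) - ln \<Phi>"
    proof -
      have "real (n - 1) = real n - 1" using npos by simp
      then show ?thesis using npos by (simp add: field_simps)
    qed
    also have "exp (real n * (ln \<Phi> - ln P + real m / real n * (ln t - ln u) + a + \<epsilon> * ln q) - ln \<Phi>)
        \<le> exp (- (r * real n) - ln \<Phi>)"
    proof -
      have "real n * (ln \<Phi> - ln P + real m / real n * (ln t - ln u) + a + \<epsilon> * ln q) \<le> real n * (- r)"
        using E npos by (intro mult_left_mono) (auto simp: \<Phi>_def m_def n_def)
      then show ?thesis by (simp add: mult.commute)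
    qed
    then have "real n * Cq * exp (real n * (ln \<Phi> - ln P + real m / real n * (ln t - ln u) + a + \<epsilon> * ln q) - ln \<Phi>)
        \<le> real n * Cq * exp (- (r * real n) - ln \<Phi>)"
      using Cq by (intro mult_left_mono) auto
    also have "real n * Cq * exp (- (r * real n) - ln \<Phi>) = g j"
      using \<Phi> by (simp add: g_def n_def exp_diff field_simps)
    finally show ?thesis by (simp add: m_def n_def)
  qed
  have lim0: "g \<longlonglongrightarrow> 0"
  proof -
    have "(\<lambda>j. real (nn j) * exp (- (r * real (nn j)))) \<longlonglongrightarrow> 0"
      using filterlim_compose[OF xexp_lim[OF r] rn] by simp
    then have "(\<lambda>j. Cq / \<Phi> * (real (nn j) * exp (- (r * real (nn j))))) \<longlonglongrightarrow> Cq / \<Phi> * 0"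
      by (intro tendsto_mult_left)
    then show ?thesis by (simp add: g_def[abs_def])
  qed
  have nonneg: "Pbb w (mm j) (nn j) P' \<ge> 0" for j P'
  proof -
    have "wt w (nn j) y \<ge> 0" for y unfolding wt_def using w0 by (intro prod_nonneg) auto
    then show ?thesis unfolding Pbb_def using Z_nonneg[of w "mm j" "nn j"] w0
      by (intro divide_nonneg_nonneg sum_nonneg) auto
  qed
  have "\<forall>\<^sub>F j in sequentially. Pbb w (mm j) (nn j) (\<lambda>y. real (Ymax (nn j) y) > \<epsilon> * real (nn j)) \<le> g j"
    using eventually_conj[OF tail eventually_conj[OF lb eventually_conj[OF ex n1]]]
    by (rule eventually_mono) (elim conjE, rule pw; assumption)
  then show ?thesis
    by (intro tendsto_sandwich[OF _ _ tendsto_const lim0]) (auto simp: nonneg)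
qed

locale wseq =
  fixes w :: "nat \<Rightarrow> real"
  assumes w_nonneg: "\<And>k. w k \<ge> 0" and w_pos0: "w 0 > 0"
begin

lemma summ: assumes "ereal \<bar>t\<bar> < conv_radius w" shows "summable (\<lambda>k. w k * t ^ k)"
  using summable_in_conv_radius[of t w] assms by simp

lemma summ1: assumes t: "0 \<le> t" "ereal t < conv_radius w"
  shows "summable (\<lambda>k. real k * w k * t ^ k)"
proof -
  obtain K where K: "t < K" "\<And>x. \<bar>x\<bar> < K \<Longrightarrow> ereal \<bar>x\<bar> < conv_radius w"
  proof (cases "conv_radius w")
    case (real R)
    then show ?thesis using t by (intro that[of R]) auto
  next
    case PInf
    then show ?thesis by (intro that[of "t + 1"]) auto
  next
    case MInf
    then show ?thesis using conv_radius_nonneg[of w] by simp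
  qed
  have "summable (\<lambda>n. diffs w n * t ^ n)"
    by (rule termdiff_converges[of t K]) (use K t summ in auto)
  then have "summable (\<lambda>n. t * (diffs w n * t ^ n))" by (rule summable_mult)
  moreover have "(\<lambda>n. t * (diffs w n * t ^ n)) = (\<lambda>n. real (Suc n) * w (Suc n) * t ^ Suc n)"
    by (auto simp: diffs_def algebra_simps)
  ultimately have "summable (\<lambda>n. real (Suc n) * w (Suc n) * t ^ Suc n)" by simp
  then show ?thesis using summable_Suc_iff[of "\<lambda>n. real n * w n * t ^ n"] by simp
qed

lemma PS_ge: assumes "0 \<le> t" "summable (\<lambda>k. w k * t ^ k)" shows "PS w t \<ge> w 0"
proof -
  have "(\<Sum>k<1. w k * t ^ k) \<le> PS w t" unfolding PS_def
    using assms w_nonneg by (intro sum_le_suminf) auto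
  then show ?thesis by simp
qed

lemma PS_pos: assumes "0 \<le> t" "summable (\<lambda>k. w k * t ^ k)" shows "PS w t > 0"
  using PS_ge[OF assms] w_pos0 by simp

lemma PS1_nonneg: assumes "0 \<le> t" "summable (\<lambda>k. real k * w k * t ^ k)" shows "PS1 w t \<ge> 0"
  unfolding PS1_def using assms w_nonneg by (intro suminf_nonneg) auto

lemma Phi_eq: assumes "0 \<le> t" "summable (\<lambda>k. w k * t ^ k)" shows "Phi w t = ennreal (PS w t)"
  unfolding Phi_def PS_def using assms w_nonneg by (intro suminf_ennreal2) auto

lemma S1_eq: assumes "0 \<le> t" "summable (\<lambda>k. real k * w k * t ^ k)"
  shows "(\<Sum>k. ennreal (real k * w k * t ^ k)) = ennreal (PS1 w t)"
  unfolding PS1_def using assms w_nonneg by (intro suminf_ennreal2) auto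

lemma Psi_eq: assumes "0 \<le> t" "summable (\<lambda>k. w k * t ^ k)" "summable (\<lambda>k. real k * w k * t ^ k)"
  shows "Psi w t = ennreal (PS1 w t / PS w t)"
  unfolding Psi_def using assms
  by (simp add: Phi_eq S1_eq divide_ennreal PS1_nonneg PS_pos)

lemma jensen_inf:
  assumes u: "u > 0" and x: "x > 0" and s1: "summable (\<lambda>k. w k * u ^ k)"
    and s2: "summable (\<lambda>k. real k * w k * u ^ k)" and s3: "summable (\<lambda>k. w k * (u * x) ^ k)"
  shows "PS w (u * x) \<ge> PS w u * x powr (PS1 w u / PS w u)"
proof -
  define a where "a = (\<lambda>k. w k * u ^ k)"
  have a0: "\<And>k. a k \<ge> 0" using w_nonneg u by (simp add: a_def)
  have sa: "summable a" using s1 by (simp add: a_def)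
  have sb: "summable (\<lambda>k. real k * a k)" using s2 by (simp add: a_def mult.assoc)
  have sx: "summable (\<lambda>k. a k * x ^ k)" using s3 by (simp add: a_def power_mult_distrib mult.assoc)
  have A: "suminf a = PS w u" by (simp add: a_def PS_def)
  have B: "(\<Sum>k. real k * a k) = PS1 w u" by (simp add: a_def PS1_def mult.assoc)
  have C: "(\<Sum>k. a k * x ^ k) = PS w (u * x)" by (simp add: a_def PS_def power_mult_distrib mult.assoc)
  have "suminf a > 0" using A PS_pos[of u] u s1 by simp
  from jensen[OF a0 sa sb sx x this] show ?thesis by (simp add: A B C)
qed

lemma Psi_mono:
  assumes u: "0 < u" "u \<le> s" and su: "summable (\<lambda>k. w k * u ^ k)" "summable (\<lambda>k. real k * w k * u ^ k)"
    and ss: "summable (\<lambda>k. w k * s ^ k)" "summable (\<lambda>k. real k * w k * s ^ k)"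
  shows "PS1 w u / PS w u \<le> PS1 w s / PS w s"
proof (cases "u = s")
  case True then show ?thesis by simp
next
  case False
  then have us: "u < s" using u by simp
  define x where "x = s / u"
  have x: "x > 1" using us u by (simp add: x_def)
  have s0: "s > 0" using u by simp
  have Pu: "PS w u > 0" using PS_pos[of u] u su by simp
  have Ps: "PS w s > 0" using PS_pos[of s] s0 ss by simp
  have J1: "PS w s \<ge> PS w u * x powr (PS1 w u / PS w u)"
    using jensen_inf[OF u(1) _ su(1) su(2), of x] x u ss by (simp add: x_def)
  have J2: "PS w u \<ge> PS w s * (1/x) powr (PS1 w s / PS w s)"
    using jensen_inf[OF s0 _ ss(1) ss(2), of "1/x"] x u su s0 by (simp add: x_def)
  have l1: "ln (PS w s) \<ge> ln (PS w u) + (PS1 w u / PS w u) * ln x"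
  proof -
    have "ln (PS w u * x powr (PS1 w u / PS w u)) \<le> ln (PS w s)"
      using J1 Pu Ps x by (subst ln_le_cancel_iff) auto
    then show ?thesis using Pu x by (simp add: ln_mult)
  qed
  have l2: "ln (PS w u) \<ge> ln (PS w s) - (PS1 w s / PS w s) * ln x"
  proof -
    have "ln (PS w s * (1/x) powr (PS1 w s / PS w s)) \<le> ln (PS w u)"
      using J2 Ps Pu x by (subst ln_le_cancel_iff) auto
    then show ?thesis using Ps x by (simp add: ln_mult ln_div)
  qed
  have "(PS1 w u / PS w u) * ln x \<le> (PS1 w s / PS w s) * ln x" using l1 l2 by linarith
  moreover have "ln x > 0" using x by simp
  ultimately show ?thesis by (rule mult_right_le_imp_le)
qed

lemma cont_below:
  fixes p :: "real \<Rightarrow> real"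
  assumes "isCont p r" "p r > c" "lo < r"
  shows "\<exists>s. lo < s \<and> s < r \<and> p s > c"
proof -
  obtain d where d: "d > 0" "\<And>s. s \<noteq> r \<Longrightarrow> norm (s - r) < d \<Longrightarrow> norm (p s - p r) < p r - c"
    using LIM_D[OF isContD[OF assms(1)], of "p r - c"] assms(2) by auto
  define h where "h = min (d/2) ((r - lo)/2)"
  have h3: "h \<le> (r - lo)/2" unfolding h_def by (rule min.cobounded2)
  have h12: "0 < h" "h < d" using d(1) assms(3) by (auto simp: h_def)
  note h = h12 h3
  define s where "s = r - h"
  have "norm (p s - p r) < p r - c" using d(2)[of s] h by (simp add: s_def)
  then have "p s > c" by (simp add: abs_less_iff)
  moreover have "lo < s" using h(3) assms(3) unfolding s_def by (simp add: field_simps)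
  moreover have "s < r" using h(1) unfolding s_def by linarith
  ultimately show ?thesis by blast
qed

lemma approx_below:
  assumes r: "r > 0" and rho: "\<And>s. 0 < s \<Longrightarrow> s < r \<Longrightarrow> ereal s < conv_radius w"
    and sr: "summable (\<lambda>k. w k * r ^ k)" and th: "\<theta> \<ge> 0"
    and K: "(\<Sum>k<K. real k * w k * r ^ k) > \<theta> * PS w r"
  shows "\<exists>u. 0 < u \<and> u < r \<and> \<theta> * PS w u < PS1 w u"
proof -
  have "isCont (\<lambda>s. \<Sum>k<K. real k * w k * s ^ k) r" by (intro continuous_intros)
  from cont_below[OF this K r] obtain u where u: "0 < u" "u < r"
    and pu: "(\<Sum>k<K. real k * w k * u ^ k) > \<theta> * PS w r" by auto
  have ur: "ereal u < conv_radius w" using rho u by simp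
  have su: "summable (\<lambda>k. w k * u ^ k)" using summ[of u] ur u by simp
  have su1: "summable (\<lambda>k. real k * w k * u ^ k)" using summ1[of u] ur u by simp
  have "PS w u \<le> PS w r" unfolding PS_def
    using su sr w_nonneg u by (intro suminf_le mult_left_mono power_mono) auto
  then have "\<theta> * PS w u \<le> \<theta> * PS w r" using th by (rule mult_left_mono)
  moreover have "(\<Sum>k<K. real k * w k * u ^ k) \<le> PS1 w u" unfolding PS1_def
    using su1 w_nonneg u by (intro sum_le_suminf) auto
  ultimately show ?thesis using u pu by (intro exI[of _ u]) auto
qed

lemma support_bound:
  assumes all: "\<And>s. 0 < s \<Longrightarrow> summable (\<lambda>k. w k * s ^ k) \<and> summable (\<lambda>k. real k * w k * s ^ k)"
    and le: "\<And>s. 1 \<le> s \<Longrightarrow> PS1 w s / PS w s \<le> lam" and lam: "lam \<ge> 0"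
  shows "\<And>k. w k > 0 \<Longrightarrow> real k \<le> lam"
proof (rule ccontr)
  fix k assume wk: "w k > 0" and kl: "\<not> real k \<le> lam"
  define B where "B = PS w 1"
  have bound: "w k * s powr real k \<le> B * s powr lam" if s: "s \<ge> 1" for s
  proof -
    have s0: "s > 0" using s by simp
    have J: "PS w (s * (1/s)) \<ge> PS w s * (1/s) powr (PS1 w s / PS w s)"
      using jensen_inf[OF s0 _ conjunct1[OF all[OF s0]] conjunct2[OF all[OF s0]], of "1/s"] s0 all[of "1"]
      by simp
    have "(1/s) powr lam \<le> (1/s) powr (PS1 w s / PS w s)"
      using le[OF s] s0 s by (intro powr_mono') auto
    then have "PS w s * (1/s) powr lam \<le> PS w s * (1/s) powr (PS1 w s / PS w s)"
      using PS_pos[of s] all[OF s0] s0 by (intro mult_left_mono) auto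
    with J have "PS w s * (1/s) powr lam \<le> B" using s0 by (simp add: B_def)
    then have PSs: "PS w s \<le> B * s powr lam"
      using s0 by (simp add: powr_divide field_simps)
    have "(\<Sum>i\<in>{k}. w i * s ^ i) \<le> (\<Sum>i. w i * s ^ i)"
      using all[OF s0] w_nonneg s0 by (intro sum_le_suminf) auto
    then have "w k * s ^ k \<le> PS w s" by (simp add: PS_def)
    then show ?thesis using PSs s0 by (simp add: powr_realpow)
  qed
  define e where "e = real k - lam"
  have e: "e > 0" using kl by (simp add: e_def)
  define s where "s = max 1 ((B / w k + 1) powr (1 / e))"
  have s1: "s \<ge> 1" by (simp add: s_def)
  have B0: "B > 0" using PS_pos[of 1] all[of 1] by (simp add: B_def)
  have "(B / w k + 1) = ((B / w k + 1) powr (1 / e)) powr e"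
    using e B0 wk by (simp add: powr_powr)
  also have "\<dots> \<le> s powr e" using e B0 wk by (intro powr_mono2) (auto simp: s_def)
  finally have sB: "B / w k + 1 \<le> s powr e" .
  have "w k * s powr real k \<le> B * s powr lam" by (rule bound[OF s1])
  moreover have "s powr real k = s powr e * s powr lam" using s1 by (simp add: e_def flip: powr_add)
  ultimately have "w k * s powr e \<le> B" using s1 by (simp add: mult.assoc)
  moreover have "w k * (B / w k + 1) \<le> w k * s powr e" using sB wk by (intro mult_left_mono) auto
  moreover have "w k * (B / w k + 1) = B + w k" using wk by (simp add: field_simps)
  ultimately show False using wk by linarith
qed

end

lemma mono_lim_top:
  fixes f :: "real \<Rightarrow> ennreal"
  assumes mono: "\<And>x y. 0 < x \<Longrightarrow> x \<le> y \<Longrightarrow> f x \<le> f y"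
  shows "(f \<longlongrightarrow> (SUP x\<in>{0<..}. f x)) at_top"
proof (rule order_tendstoI)
  fix a assume "a < (SUP x\<in>{0<..}. f x)"
  then obtain x0 where x0: "x0 > 0" "a < f x0" by (auto simp: less_SUP_iff)
  have "a < f x" if "x0 \<le> x" for x using less_le_trans[OF x0(2) mono[OF x0(1) that]] .
  then show "\<forall>\<^sub>F x in at_top. a < f x" using eventually_ge_at_top[of x0] by (rule eventually_mono[rotated])
next
  fix a assume a: "(SUP x\<in>{0<..}. f x) < a"
  have "f x < a" if "0 < x" for x
  proof -
    have "f x \<le> (SUP x\<in>{0<..}. f x)" using that by (intro SUP_upper) auto
    then show ?thesis using a by simp
  qed
  then show "\<forall>\<^sub>F x in at_top. f x < a" using eventually_gt_at_top[of 0] by (rule eventually_mono[rotated])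
qed

lemma mono_lim_left:
  fixes f :: "real \<Rightarrow> ennreal"
  assumes r: "r > 0" and mono: "\<And>x y. 0 < x \<Longrightarrow> x \<le> y \<Longrightarrow> y < r \<Longrightarrow> f x \<le> f y"
  shows "(f \<longlongrightarrow> (SUP x\<in>{0<..<r}. f x)) (at_left r)"
proof (rule order_tendstoI)
  fix a assume "a < (SUP x\<in>{0<..<r}. f x)"
  then obtain x0 where x0: "x0 > 0" "x0 < r" "a < f x0" by (auto simp: less_SUP_iff)
  have "a < f x" if "x \<in> {x0<..<r}" for x using less_le_trans[OF x0(3) mono[OF x0(1)]] that by auto
  then show "\<forall>\<^sub>F x in at_left r. a < f x" using eventually_at_left_real[OF x0(2)]
    by (rule eventually_mono[rotated])
next
  fix a assume a: "(SUP x\<in>{0<..<r}. f x) < a"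
  have "f x < a" if "x \<in> {0<..<r}" for x
  proof -
    have "f x \<le> (SUP x\<in>{0<..<r}. f x)" using that by (intro SUP_upper) auto
    then show ?thesis using a by simp
  qed
  then show "\<forall>\<^sub>F x in at_left r. f x < a" using eventually_at_left_real[OF r]
    by (rule eventually_mono[rotated])
qed

context wseq begin

lemma Phi_finite:
  assumes R: "R > 0" and rho: "\<And>s. 0 < s \<Longrightarrow> s < R \<Longrightarrow> ereal s < conv_radius w" and lam: "lam \<ge> 0"
    and all: "\<And>s. 0 < s \<Longrightarrow> s < R \<Longrightarrow> PS1 w s / PS w s \<le> lam"
  shows "Phi w R < \<infinity>"
proof -
  have sm: "summable (\<lambda>k. w k * s ^ k) \<and> summable (\<lambda>k. real k * w k * s ^ k)" if "0 < s" "s < R" for s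
    using summ[of s] summ1[of s] rho[OF that] that by auto
  define u where "u = R / 2"
  have u: "0 < u" "u < R" using R by (auto simp: u_def)
  define B where "B = PS w u / (u / R) powr lam"
  have uR: "(u / R) powr lam > 0" using u R by simp
  have bnd: "PS w s \<le> B" if s: "u \<le> s" "s < R" for s
  proof -
    have s0: "s > 0" using s u by simp
    have J: "PS w (s * (u / s)) \<ge> PS w s * (u / s) powr (PS1 w s / PS w s)"
      using jensen_inf[OF s0, of "u/s"] sm[OF s0 s(2)] sm[OF u] s0 u by simp
    have "(u / s) powr lam \<le> (u / s) powr (PS1 w s / PS w s)"
      using all[OF s0 s(2)] s0 s u by (intro powr_mono') auto
    moreover have "(u / R) powr lam \<le> (u / s) powr lam"
      using lam u s s0 by (intro powr_mono2) (auto simp: frac_le)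
    ultimately have "(u / R) powr lam \<le> (u / s) powr (PS1 w s / PS w s)" by simp
    then have "PS w s * (u / R) powr lam \<le> PS w s * (u / s) powr (PS1 w s / PS w s)"
      using PS_pos[of s] sm[OF s0 s(2)] s0 by (intro mult_left_mono) auto
    with J have "PS w s * (u / R) powr lam \<le> PS w u" using s0 by simp
    then show ?thesis using uR by (simp add: B_def pos_le_divide_eq)
  qed
  have part: "(\<Sum>k<K. w k * R ^ k) \<le> B" for K
  proof (rule ccontr)
    assume "\<not> ?thesis"
    then have gt: "(\<Sum>k<K. w k * R ^ k) > B" by simp
    have "isCont (\<lambda>s. \<Sum>k<K. w k * s ^ k) R" by (intro continuous_intros)
    from cont_below[OF this gt u(2)] obtain s where s: "u < s" "s < R" "(\<Sum>k<K. w k * s ^ k) > B" by auto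
    have s0: "s > 0" using s u by simp
    have "(\<Sum>k<K. w k * s ^ k) \<le> PS w s" unfolding PS_def
      using sm[OF s0 s(2)] w_nonneg s0 by (intro sum_le_suminf) auto
    with bnd[of s] s show False by simp
  qed
  have "Phi w R = (SUP K. \<Sum>k<K. ennreal (w k * R ^ k))" unfolding Phi_def by (rule suminf_eq_SUP)
  also have "\<dots> \<le> ennreal B"
  proof (rule SUP_least)
    fix K
    have "(\<Sum>k<K. ennreal (w k * R ^ k)) = ennreal (\<Sum>k<K. w k * R ^ k)"
      using w_nonneg R by (intro sum_ennreal) auto
    also have "\<dots> \<le> ennreal B" using part[of K] by (rule ennreal_leI)
    finally show "(\<Sum>k<K. ennreal (w k * R ^ k)) \<le> ennreal B" .
  qed
  also have "\<dots> < \<infinity>" by (simp add: infinity_ennreal_def)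
  finally show ?thesis .
qed

end

context wseq begin

lemma Psi_mono_e:
  assumes "0 < x" "x \<le> y" "ereal y < conv_radius w"
  shows "Psi w x \<le> Psi w y"
proof -
  have x: "ereal x < conv_radius w" using assms by (meson ereal_less_eq(3) order_le_less_trans)
  have sx: "summable (\<lambda>k. w k * x ^ k)" "summable (\<lambda>k. real k * w k * x ^ k)"
    using summ[of x] summ1[of x] x assms by auto
  have sy: "summable (\<lambda>k. w k * y ^ k)" "summable (\<lambda>k. real k * w k * y ^ k)"
    using summ[of y] summ1[of y] assms by auto
  have "PS1 w x / PS w x \<le> PS1 w y / PS w y" by (rule Psi_mono[OF assms(1,2) sx sy])
  then show ?thesis using Psi_eq[of x] Psi_eq[of y] sx sy assms by (simp add: ennreal_leI)
qed

lemma NU: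
  assumes lam: "lam > 0" and le: "ennreal lam \<le> nu w"
  shows "(\<exists>t1 t0. 0 < t1 \<and> t1 < t0 \<and> ereal t0 < conv_radius w \<and> lam * PS w t1 < PS1 w t1)
    \<or> (\<exists>r. 0 < r \<and> conv_radius w = ereal r \<and> summable (\<lambda>k. w k * r ^ k) \<and>
          summable (\<lambda>k. real k * w k * r ^ k) \<and> PS1 w r = lam * PS w r)
    \<or> (\<forall>k. w k > 0 \<longrightarrow> real k \<le> lam)"
proof -
  have lam0: "lam \<ge> 0" using lam by simp
  consider (inf) "conv_radius w = \<infinity>" | (fin) R where "conv_radius w = ereal R" "R \<ge> 0"
    using conv_radius_nonneg[of w] by (cases "conv_radius w") auto
  then show ?thesis
  proof cases
    case inf
    have sm: "summable (\<lambda>k. w k * s ^ k) \<and> summable (\<lambda>k. real k * w k * s ^ k)" if "0 < s" for s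
      using summ[of s] summ1[of s] inf that by auto
    have mono: "Psi w x \<le> Psi w y" if "0 < x" "x \<le> y" for x y
      using Psi_mono_e[OF that] inf by simp
    have nuS: "nu w = (SUP x\<in>{0<..}. Psi w x)"
      unfolding nu_def using inf tendsto_Lim[OF trivial_limit_at_top_linorder mono_lim_top[OF mono]] by simp
    show ?thesis
    proof (cases "ennreal lam < (SUP x\<in>{0<..}. Psi w x)")
      case True
      then obtain t where t: "t > 0" "ennreal lam < Psi w t" by (auto simp: less_SUP_iff)
      then have "lam < PS1 w t / PS w t" using Psi_eq[of t] sm[OF t(1)] lam0 by (simp add: ennreal_less_iff)
      then have "lam * PS w t < PS1 w t" using PS_pos[of t] sm[OF t(1)] t by (simp add: pos_less_divide_eq)
      then show ?thesis using t inf by (intro disjI1 exI[of _ t] exI[of _ "t+1"]) auto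
    next
      case False
      then have "(SUP x\<in>{0<..}. Psi w x) \<le> ennreal lam" by simp
      then have le0: "Psi w s \<le> ennreal lam" if "0 < s" for s using that by (auto simp: SUP_le_iff)
      have le1: "PS1 w s / PS w s \<le> lam" if "1 \<le> s" for s
      proof -
        have s0: "0 < s" using that by simp
        have "ennreal (PS1 w s / PS w s) \<le> ennreal lam" using le0[OF s0] Psi_eq[of s] sm[OF s0] s0 by simp
        then show ?thesis using lam0 by simp
      qed
      show ?thesis using support_bound[OF sm le1 lam0] by auto
    qed
  next
    case fin
    have rho: "ereal s < conv_radius w" if "0 < s" "s < R" for s using fin that by simp
    have nuR: "nu w = (if Phi w R < \<infinity> then Psi w R else Lim (at_left R) (Psi w))"
      unfolding nu_def using fin by simp
    show ?thesis
    proof (cases "R = 0")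
      case True
      have P0: "Phi w 0 = ennreal (w 0)"
      proof -
        have "Phi w 0 = (\<Sum>k\<in>{0}. ennreal (w k * 0 ^ k))" unfolding Phi_def
          by (rule suminf_finite) (auto simp: power_0_left)
        then show ?thesis by simp
      qed
      have z: "real k * w k * 0 ^ k = 0" for k :: nat by (cases k) auto
      have S0: "(\<Sum>k. ennreal (real k * w k * 0 ^ k)) = 0" by (simp add: z)
      have "nu w = 0" using nuR True P0 S0 by (simp add: Psi_def infinity_ennreal_def)
      then show ?thesis using le lam by simp
    next
      case False
      then have R: "R > 0" using fin by simp
      show ?thesis
      proof (cases "Phi w R < \<infinity>")
        case True
        have sR: "summable (\<lambda>k. w k * R ^ k)"
          using True w_nonneg R by (intro summable_suminf_not_top) (auto simp: Phi_def infinity_ennreal_def)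
        have PR: "Phi w R = ennreal (PS w R)" by (rule Phi_eq) (use R sR in auto)
        have PSR: "PS w R > 0" using PS_pos[of R] R sR by auto
        define S1 where "S1 = (\<Sum>k. ennreal (real k * w k * R ^ k))"
        have PsiR: "Psi w R = S1 / ennreal (PS w R)" by (simp add: Psi_def S1_def PR)
        have nuE: "nu w = Psi w R" using nuR True by simp
        show ?thesis
        proof (cases "ennreal lam < Psi w R")
          case True
          have "ennreal (lam * PS w R) < S1"
          proof (cases "S1 = top")
            case True then show ?thesis by simp
          next
            case False
            then obtain s1 where s1: "S1 = ennreal s1" "s1 \<ge> 0" by (cases S1) auto
            then have "Psi w R = ennreal (s1 / PS w R)" using PsiR PSR by (simp add: divide_ennreal)
            then have "lam < s1 / PS w R" using \<open>ennreal lam < Psi w R\<close> lam0 by (simp add: ennreal_less_iff)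
            then have "lam * PS w R < s1" using PSR by (simp add: pos_less_divide_eq)
            then show ?thesis using s1 lam0 PSR by (simp add: ennreal_less_iff)
          qed
          then obtain K where K: "ennreal (lam * PS w R) < (\<Sum>k<K. ennreal (real k * w k * R ^ k))"
            unfolding S1_def suminf_eq_SUP less_SUP_iff by auto
          have "(\<Sum>k<K. ennreal (real k * w k * R ^ k)) = ennreal (\<Sum>k<K. real k * w k * R ^ k)"
            using w_nonneg R by (intro sum_ennreal) auto
          with K have "lam * PS w R < (\<Sum>k<K. real k * w k * R ^ k)"
            using lam0 PSR by (simp add: ennreal_less_iff)
          from approx_below[OF R rho sR lam0 this] obtain u where u: "0 < u" "u < R" "lam * PS w u < PS1 w u"
            by auto
          then show ?thesis using fin by (intro disjI1 exI[of _ u] exI[of _ "(u+R)/2"]) auto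
        next
          case False
          then have eq: "Psi w R = ennreal lam" using le nuE by auto
          have S1top: "S1 \<noteq> top"
          proof
            assume "S1 = top"
            then have "Psi w R = top" using PsiR by (simp add: ennreal_top_divide)
            then show False using eq by simp
          qed
          have sR1: "summable (\<lambda>k. real k * w k * R ^ k)"
            using S1top w_nonneg R by (intro summable_suminf_not_top) (auto simp: S1_def)
          have "ennreal (PS1 w R / PS w R) = ennreal lam" using eq Psi_eq[of R] sR sR1 R by simp
          moreover have "PS1 w R / PS w R \<ge> 0" using PS1_nonneg[of R] sR1 R PSR by simp
          ultimately have "PS1 w R / PS w R = lam" using lam0 by simp
          then have "PS1 w R = lam * PS w R" using PSR by (simp add: field_simps)
          then show ?thesis using R fin sR sR1 by (intro disjI2 disjI1 exI[of _ R]) auto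
        qed
      next
        case False
        have mono: "Psi w x \<le> Psi w y" if "0 < x" "x \<le> y" "y < R" for x y
          using Psi_mono_e[OF that(1,2)] rho[of y] that by simp
        have nuS: "nu w = (SUP x\<in>{0<..<R}. Psi w x)"
          using nuR False tendsto_Lim[OF trivial_limit_at_left_real mono_lim_left[OF R mono]] by simp
        show ?thesis
        proof (cases "ennreal lam < (SUP x\<in>{0<..<R}. Psi w x)")
          case True
          then obtain t where t: "0 < t" "t < R" "ennreal lam < Psi w t" by (auto simp: less_SUP_iff)
          have st: "summable (\<lambda>k. w k * t ^ k)" "summable (\<lambda>k. real k * w k * t ^ k)"
            using summ[of t] summ1[of t] rho[OF t(1,2)] t by auto
          then have "lam < PS1 w t / PS w t" using Psi_eq[of t] t lam0 by (simp add: ennreal_less_iff)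
          then have "lam * PS w t < PS1 w t" using PS_pos[of t] st t by (simp add: pos_less_divide_eq)
          then show ?thesis using t fin by (intro disjI1 exI[of _ t] exI[of _ "(t+R)/2"]) auto
        next
          case False
          then have "(SUP x\<in>{0<..<R}. Psi w x) \<le> ennreal lam" by simp
          then have le0: "Psi w s \<le> ennreal lam" if "0 < s" "s < R" for s using that by (auto simp: SUP_le_iff)
          have all: "PS1 w s / PS w s \<le> lam" if "0 < s" "s < R" for s
          proof -
            have st: "summable (\<lambda>k. w k * s ^ k)" "summable (\<lambda>k. real k * w k * s ^ k)"
              using summ[of s] summ1[of s] rho[OF that] that by auto
            have "ennreal (PS1 w s / PS w s) \<le> ennreal lam" using le0[OF that] Psi_eq[of s] st that by simp
            then show ?thesis using lam0 by simp
          qed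
          have "Phi w R < \<infinity>" by (rule Phi_finite[OF R rho lam0 all])
          with \<open>\<not> Phi w R < \<infinity>\<close> show ?thesis by simp
        qed
      qed
    qed
  qed
qed

end

definition trunc :: "(nat \<Rightarrow> real) \<Rightarrow> nat \<Rightarrow> nat \<Rightarrow> real" where
  "trunc w K k = (if k < K then w k else 0)"

lemma PS_trunc: "PS (trunc w K) t = (\<Sum>k<K. w k * t ^ k)"
  unfolding PS_def by (subst suminf_finite[of "{..<K}"]) (auto simp: trunc_def)

lemma PS1_trunc: "PS1 (trunc w K) t = (\<Sum>k<K. real k * w k * t ^ k)"
  unfolding PS1_def by (subst suminf_finite[of "{..<K}"]) (auto simp: trunc_def)

lemma lim_PS_trunc: assumes "summable (\<lambda>k. w k * t ^ k)" shows "(\<lambda>K. PS (trunc w K) t) \<longlonglongrightarrow> PS w t"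
proof -
  have "(\<lambda>K. \<Sum>k<K. w k * t ^ k) \<longlonglongrightarrow> PS w t" unfolding PS_def by (rule summable_LIMSEQ[OF assms])
  then show ?thesis by (simp add: PS_trunc)
qed

lemma lim_PS1_trunc: assumes "summable (\<lambda>k. real k * w k * t ^ k)" shows "(\<lambda>K. PS1 (trunc w K) t) \<longlonglongrightarrow> PS1 w t"
proof -
  have "(\<lambda>K. \<Sum>k<K. real k * w k * t ^ k) \<longlonglongrightarrow> PS1 w t" unfolding PS1_def by (rule summable_LIMSEQ[OF assms])
  then show ?thesis by (simp add: PS1_trunc)
qed

lemma tail_bound:
  fixes w :: "nat \<Rightarrow> real"
  assumes w0: "\<And>k. w k \<ge> 0" and u: "0 < u" "u < s" and ss: "summable (\<lambda>k. w k * s ^ k)"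
  shows "(\<Sum>k\<in>{k\<in>{..m}. e < real k}. w k * u ^ k) \<le> PS w s * (u / s) powr e"
proof -
  have s0: "s > 0" using u by simp
  have "(\<Sum>k\<in>{k\<in>{..m}. e < real k}. w k * u ^ k) \<le> (\<Sum>k\<in>{k\<in>{..m}. e < real k}. w k * s ^ k * (u / s) powr e)"
  proof (intro sum_mono)
    fix k assume k: "k \<in> {k\<in>{..m}. e < real k}"
    have "u ^ k = s ^ k * (u / s) powr real k" using u s0 by (simp add: powr_realpow power_divide)
    also have "\<dots> \<le> s ^ k * (u / s) powr e" using k u s0 by (intro mult_left_mono powr_mono') auto
    finally have "u ^ k \<le> s ^ k * (u / s) powr e" .
    then have "w k * u ^ k \<le> w k * (s ^ k * (u / s) powr e)" using w0 by (intro mult_left_mono) auto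
    then show "w k * u ^ k \<le> w k * s ^ k * (u / s) powr e" by (simp add: mult.assoc)
  qed
  also have "\<dots> = (\<Sum>k\<in>{k\<in>{..m}. e < real k}. w k * s ^ k) * (u / s) powr e"
    by (simp add: sum_distrib_right)
  also have "(\<Sum>k\<in>{k\<in>{..m}. e < real k}. w k * s ^ k) \<le> PS w s" unfolding PS_def
    using ss w0 s0 by (intro sum_le_suminf) auto
  then have "(\<Sum>k\<in>{k\<in>{..m}. e < real k}. w k * s ^ k) * (u / s) powr e \<le> PS w s * (u / s) powr e"
    by (intro mult_right_mono) auto
  finally show ?thesis .
qed

lemma trunc_tail_mono:
  fixes w :: "nat \<Rightarrow> real"
  assumes w0: "\<And>k. w k \<ge> 0" and t: "0 \<le> t" "t \<le> t1" and s1: "summable (\<lambda>k. w k * t1 ^ k)"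
    and s: "summable (\<lambda>k. w k * t ^ k)"
  shows "PS w t - PS (trunc w K) t \<le> PS w t1 - PS (trunc w K) t1"
proof -
  have f: "summable (\<lambda>k. trunc w K k * x ^ k)" for x
    by (rule summable_fin[of K]) (simp add: trunc_def)
  have "PS w t - PS (trunc w K) t = (\<Sum>k. w k * t ^ k - trunc w K k * t ^ k)"
    unfolding PS_def by (rule suminf_diff[OF s f])
  also have "\<dots> \<le> (\<Sum>k. w k * t1 ^ k - trunc w K k * t1 ^ k)"
  proof (rule suminf_le)
    fix k show "w k * t ^ k - trunc w K k * t ^ k \<le> w k * t1 ^ k - trunc w K k * t1 ^ k"
      using w0[of k] t by (auto simp: trunc_def intro!: mult_left_mono power_mono)
  qed (intro summable_diff s s1 f)+
  also have "\<dots> = PS w t1 - PS (trunc w K) t1"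
    unfolding PS_def by (rule suminf_diff[OF s1 f, symmetric])
  finally show ?thesis .
qed

context wseq begin

lemma finw_trunc: "K \<ge> 1 \<Longrightarrow> finw (trunc w K) K"
  by unfold_locales (auto simp: trunc_def w_nonneg w_pos0)

lemma T0:
  assumes ks: "w ks > 0" "real ks > lam" and lam: "lam \<ge> 0"
  shows "\<exists>A d N0 C M c. (\<forall>a\<in>A. 0 < w a) \<and> M \<in> A \<and> real M > lam \<and> M > 0 \<and>
     (\<forall>k. w k \<noteq> 0 \<longrightarrow> d dvd k) \<and>
     (\<forall>X j. N0 \<le> X \<longrightarrow> d dvd X \<longrightarrow> X + C * M \<le> j * M \<longrightarrow> rp A j X) \<and>
     c > 0 \<and> c \<le> w 0 \<and> (\<forall>a\<in>A. c \<le> w a)"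
proof -
  define Sp where "Sp = {k. 0 < k \<and> 0 < w k}"
  have ksS: "ks \<in> Sp" using ks lam by (auto simp: Sp_def)
  define Pr where "Pr F = (finite F \<and> F \<noteq> {} \<and> F \<subseteq> Sp)" for F :: "nat set"
  have "Pr {ks}" using ksS by (simp add: Pr_def)
  from ex_has_least_nat[of Pr "{ks}" Gcd, OF this]
  obtain F where F: "Pr F" and Fmin: "\<And>F'. Pr F' \<Longrightarrow> Gcd F \<le> Gcd F'" by blast
  define d where "d = Gcd F"
  have F0: "0 \<notin> F" using F by (auto simp: Pr_def Sp_def)
  have d0: "d > 0"
  proof -
    have "\<not> F \<subseteq> {0}" using F F0 by (auto simp: Pr_def)
    then have "Gcd F \<noteq> 0" by simp
    then show ?thesis unfolding d_def by linarith
  qed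
  have dvS: "d dvd s" if s: "s \<in> Sp" for s
  proof -
    have PrI: "Pr (insert s F)" using F s by (auto simp: Pr_def)
    have "d \<le> gcd s d" using Fmin[OF PrI] by (simp add: d_def)
    moreover have "gcd s d \<le> d" using d0 by (intro dvd_imp_le) auto
    ultimately have "gcd s d = d" by simp
    then show ?thesis by (metis gcd_dvd1)
  qed
  have dvall: "\<forall>k. w k \<noteq> 0 \<longrightarrow> d dvd k"
  proof (intro allI impI)
    fix k assume "w k \<noteq> 0"
    then show "d dvd k"
    proof (cases "k = 0")
      case False
      then have "k \<in> Sp" using \<open>w k \<noteq> 0\<close> w_nonneg[of k] by (auto simp: Sp_def)
      then show ?thesis by (rule dvS)
    qed simp
  qed
  define A where "A = insert ks F"
  have fA: "finite A" using F by (simp add: A_def Pr_def)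
  have AS: "A \<subseteq> Sp" using F ksS by (auto simp: A_def Pr_def)
  define M where "M = Max A"
  have MA: "M \<in> A" unfolding M_def by (rule Max_in[OF fA]) (simp add: A_def)
  have Mks: "ks \<le> M" using fA by (simp add: M_def A_def)
  have dvA: "\<And>a. a \<in> A \<Longrightarrow> d dvd a" using AS dvS by auto
  obtain P Q j1 j2 where PQ: "rp F j1 P" "rp F j2 Q" "P = Q + Gcd F"
    using bezout_set[of F] F F0 by (auto simp: Pr_def)
  have FA: "F \<subseteq> A" by (auto simp: A_def)
  obtain N0 where N0: "\<forall>x\<ge>N0. d dvd x \<longrightarrow> (\<exists>j. rp A j x)"
    using frob[OF rp_subset[OF PQ(1) FA] rp_subset[OF PQ(2) FA] _ d0 dvA] PQ(3) by (auto simp: d_def)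
  obtain C where C: "\<forall>X j. N0 \<le> X \<longrightarrow> d dvd X \<longrightarrow> X + C * M \<le> j * M \<longrightarrow> rp A j X"
    using nt_bounded[of N0 d A M] N0 MA dvA[OF MA] Mks ks lam by fastforce
  define c where "c = Min (w ` insert 0 A)"
  have cin: "c \<in> w ` insert 0 A" unfolding c_def by (rule Min_in) (use fA in auto)
  have c0: "c > 0" using cin AS w_pos0 by (auto simp: Sp_def)
  have cle: "c \<le> w a" if "a \<in> insert 0 A" for a unfolding c_def by (rule Min_le) (use fA that in auto)
  show ?thesis
    apply (rule exI[of _ A], rule exI[of _ d], rule exI[of _ N0], rule exI[of _ C], rule exI[of _ M], rule exI[of _ c])
    using AS MA Mks ks lam dvall C c0 cle by (auto simp: Sp_def)
qed

lemma exists_big: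
  assumes "0 < t" "summable (\<lambda>k. w k * t ^ k)" "summable (\<lambda>k. real k * w k * t ^ k)"
    and "lam * PS w t \<le> PS1 w t" and lam: "lam > 0"
  shows "\<exists>ks. w ks > 0 \<and> real ks > lam"
proof (rule ccontr)
  assume "\<not> ?thesis"
  then have le: "w k > 0 \<Longrightarrow> real k \<le> lam" for k by force
  have t: "\<And>k. real k * w k * t ^ k \<le> lam * (w k * t ^ k)"
  proof -
    fix k show "real k * w k * t ^ k \<le> lam * (w k * t ^ k)"
    proof (cases "w k > 0")
      case True then show ?thesis using le[OF True] assms(1) by (simp add: mult_right_mono mult.assoc)
    next
      case False then have "w k = 0" using w_nonneg[of k] by simp
      then show ?thesis by simp
    qed
  qed
  have "PS w t * lam - PS1 w t = (\<Sum>k. lam * (w k * t ^ k) - real k * w k * t ^ k)"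
    unfolding PS_def PS1_def using assms(2,3)
    by (simp add: suminf_diff[symmetric] suminf_mult summable_mult mult.commute)
  also have "\<dots> \<ge> (\<Sum>k\<in>{0}. lam * (w k * t ^ k) - real k * w k * t ^ k)"
    using t assms(2,3) by (intro sum_le_suminf summable_diff summable_mult) (auto simp: algebra_simps)
  finally have "PS w t * lam - PS1 w t \<ge> lam * w 0" by simp
  moreover have "lam * w 0 > 0" using lam w_pos0 by simp
  ultimately show False using assms(4) by (simp add: mult.commute)
qed

end

context wseq begin

lemma case_b:
  fixes mm nn :: "nat \<Rightarrow> nat"
  assumes lam: "lam > 0" and t: "0 < t1" "t1 < t0" "ereal t0 < conv_radius w"
    and big: "lam * PS w t1 < PS1 w t1"
    and nn: "filterlim nn at_top sequentially"
    and zp: "\<forall>\<^sub>F j in sequentially. Z w (mm j) (nn j) > 0"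
    and lim: "(\<lambda>j. real (mm j) / real (nn j)) \<longlonglongrightarrow> lam"
    and eps: "\<epsilon> > 0"
  shows "(\<lambda>j. Pbb w (mm j) (nn j) (\<lambda>y. real (Ymax (nn j) y) > \<epsilon> * real (nn j))) \<longlonglongrightarrow> 0"
proof -
  have lam0: "lam \<ge> 0" using lam by simp
  have "ereal t1 < ereal t0" using t by simp
  then have t1r: "ereal t1 < conv_radius w" using t(3) by (rule order.strict_trans)
  have st0: "summable (\<lambda>k. w k * t0 ^ k)" using summ[of t0] t by simp
  have st1: "summable (\<lambda>k. w k * t1 ^ k)" using summ[of t1] t1r t by simp
  have st1': "summable (\<lambda>k. real k * w k * t1 ^ k)" using summ1[of t1] t1r t by simp
  obtain ks where ks: "w ks > 0" "real ks > lam"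
    using exists_big[OF t(1) st1 st1' less_imp_le[OF big] lam] by blast
  obtain A d N0 C M c where T: "\<forall>a\<in>A. 0 < w a" "M \<in> A" "real M > lam" "M > 0"
      "\<forall>k. w k \<noteq> 0 \<longrightarrow> d dvd k"
      "\<forall>X j. N0 \<le> X \<longrightarrow> d dvd X \<longrightarrow> X + C * M \<le> j * M \<longrightarrow> rp A j X"
      "c > 0" "c \<le> w 0" "\<forall>a\<in>A. c \<le> w a"
    using T0[OF ks lam0] by blast
  have dZ: "d dvd x" if "Z w x N > 0" for x N
    by (rule Z_dvd[of w d x N]) (use T(5) that in auto)
  have dm: "\<forall>\<^sub>F j in sequentially. d dvd mm j"
    using zp by (rule eventually_mono) (rule dZ)
  define c0 where "c0 = \<epsilon> * ln (t0 / t1)"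
  have c0: "c0 > 0" using t eps by (simp add: c0_def)
  have l1: "(\<lambda>K. PS1 (trunc w K) t1 - lam * PS (trunc w K) t1) \<longlonglongrightarrow> PS1 w t1 - lam * PS w t1"
    by (intro tendsto_intros lim_PS1_trunc lim_PS_trunc st1 st1')
  have e1: "\<forall>\<^sub>F K in sequentially. 0 < PS1 (trunc w K) t1 - lam * PS (trunc w K) t1"
    using order_tendstoD(1)[OF l1, of 0] big by simp
  have l2: "(\<lambda>K. PS w t1 - PS (trunc w K) t1) \<longlonglongrightarrow> PS w t1 - PS w t1"
    by (intro tendsto_intros lim_PS_trunc st1)
  have e2: "\<forall>\<^sub>F K in sequentially. PS w t1 - PS (trunc w K) t1 < w 0 * c0 / 4"
    using order_tendstoD(2)[OF l2, of "w 0 * c0 / 4"] c0 w_pos0 by simp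
  have "\<forall>\<^sub>F K in sequentially. (0 < PS1 (trunc w K) t1 - lam * PS (trunc w K) t1 \<and>
      PS w t1 - PS (trunc w K) t1 < w 0 * c0 / 4) \<and> 1 \<le> K"
    by (intro eventually_conj e1 e2 eventually_ge_at_top)
  then obtain K where K: "0 < PS1 (trunc w K) t1 - lam * PS (trunc w K) t1"
      "PS w t1 - PS (trunc w K) t1 < w 0 * c0 / 4" "1 \<le> K"
    unfolding eventually_sequentially by blast
  define v where "v = trunc w K"
  have fv: "finw v K" unfolding v_def by (rule finw_trunc[OF K(3)])
  have vw: "v k \<le> w k" for k using w_nonneg by (simp add: v_def trunc_def)
  have vd: "v k \<noteq> 0 \<Longrightarrow> d dvd k" for k using T(5) by (auto simp: v_def trunc_def split: if_splits)
  have v0: "v 0 = w 0" using K(3) by (simp add: v_def trunc_def)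
  have PSv: "PS v s \<ge> w 0" if "s \<ge> 0" for s using finw.PS_pos[OF fv that] v0 by simp
  have cont: "continuous_on {0..t1} (\<lambda>s. PS1 v s / PS v s)"
  proof -
    have "\<forall>s\<in>{0..t1}. PS v s \<noteq> 0" using PSv w_pos0 by force
    then show ?thesis using finw.cont_PS[OF fv] finw.cont_PS1[OF fv] by (intro continuous_on_divide) auto
  qed
  have z: "real k * v k * 0 ^ k = 0" for k :: nat by (cases k) auto
  have f0: "PS1 v 0 / PS v 0 = 0" by (simp add: finw.PS1_eq[OF fv] z)
  have ft1: "lam \<le> PS1 v t1 / PS v t1"
  proof -
    have "lam * PS v t1 < PS1 v t1" using K(1) by (simp add: v_def)
    moreover have "PS v t1 > 0" using PSv[of t1] t w_pos0 by simp
    ultimately show ?thesis by (simp add: pos_le_divide_eq)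
  qed
  obtain t where tt: "0 \<le> t" "t \<le> t1" "PS1 v t / PS v t = lam"
    using IVT'[of "\<lambda>s. PS1 v s / PS v s" 0 lam t1] f0 lam0 ft1 t cont by auto
  have tpos: "t > 0" using tt f0 lam by (cases "t = 0") auto
  have "ereal t \<le> ereal t1" using tt by simp
  then have tr: "ereal t < conv_radius w" using t1r by (rule order_le_less_trans)
  have st: "summable (\<lambda>k. w k * t ^ k)" using summ[of t] tr tt by simp
  define Lc where "Lc = \<bar>ln c\<bar> + real M * \<bar>ln t\<bar> + \<bar>ln (PS v t)\<bar>"
  have Lc0: "Lc \<ge> 0" by (simp add: Lc_def)
  define \<eta> where "\<eta> = min (1/2) (c0 / (4 * (Lc + 1)))"
  have eta: "0 < \<eta>" "\<eta> < 1" using c0 Lc0 by (auto simp: \<eta>_def)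
  have etaL: "\<eta> * Lc \<le> c0 / 4"
  proof -
    have "\<eta> * Lc \<le> (c0 / (4 * (Lc + 1))) * Lc" using Lc0 by (intro mult_right_mono) (auto simp: \<eta>_def)
    also have "\<dots> \<le> (c0 / (4 * (Lc + 1))) * (Lc + 1)" using c0 Lc0 by (intro mult_left_mono) auto
    also have "\<dots> = c0 / 4" using Lc0 by (simp add: field_simps)
    finally show ?thesis .
  qed
  define \<delta> where "\<delta> = c0 / 4"
  have mu1: "\<bar>lam - PS1 v t / PS v t\<bar> < \<eta> * (PS1 v t / PS v t)" using tt eta lam by simp
  have mu2: "\<bar>lam - PS1 v t / PS v t\<bar> < \<eta> * (real M - PS1 v t / PS v t)" using tt eta T(3) by simp
  have lb: "\<forall>\<^sub>F j in sequentially. Z w (mm j) (nn j) * t ^ (mm j) \<ge>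
     PS v t ^ (nn j) * exp (- ((\<eta> * Lc + \<delta>) * real (nn j)))"
    unfolding Lc_def
    by (rule LB[OF w_nonneg fv vw vd _ T(7,8) _ T(4) tpos nn lim dm eta mu1 mu2])
       (use T(6) T(9) c0 in \<open>auto simp: \<delta>_def\<close>)
  have tail: "\<forall>\<^sub>F j in sequentially. (\<Sum>k\<in>{k\<in>{..mm j}. \<epsilon> * real (nn j) < real k}. w k * t ^ k)
                  \<le> PS w t0 * (t / t0) powr (\<epsilon> * real (nn j))"
    using tail_bound[OF w_nonneg tpos _ st0] tt t by auto
  have h1: "ln (PS w t) - ln (PS v t) \<le> c0 / 4"
  proof -
    have "PS w t - PS v t \<le> PS w t1 - PS v t1"
      unfolding v_def by (rule trunc_tail_mono[OF w_nonneg tt(1,2) st1 st])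
    then have d1: "PS w t - PS v t < w 0 * c0 / 4" using K(2) by (simp add: v_def)
    have pv: "PS v t \<ge> w 0" using PSv tt by simp
    have pw: "PS w t > 0" using PS_pos[of t] st tt by simp
    have pv0: "PS v t > 0" using pv w_pos0 by simp
    have "ln (PS w t) - ln (PS v t) = ln (PS w t / PS v t)" using pw pv0 by (simp add: ln_div)
    also have "\<dots> \<le> PS w t / PS v t - 1" using pw pv0 by (intro ln_le_minus_one) simp
    also have "\<dots> = (PS w t - PS v t) / PS v t" using pv0 by (simp add: field_simps)
    also have "\<dots> \<le> (w 0 * c0 / 4) / PS v t" using d1 pv0 by (intro divide_right_mono) auto
    also have "\<dots> \<le> (w 0 * c0 / 4) / w 0" using pv w_pos0 c0 by (intro divide_left_mono) auto
    also have "\<dots> = c0 / 4" using w_pos0 by simp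
    finally show ?thesis .
  qed
  have h2: "\<epsilon> * ln (t / t0) \<le> - c0"
  proof -
    have "ln (t / t0) = ln t - ln t0" using tpos t by (simp add: ln_div)
    also have "\<dots> \<le> ln t1 - ln t0" using tpos tt by simp
    also have "\<dots> = - ln (t0 / t1)" using t by (simp add: ln_div)
    finally have "\<epsilon> * ln (t / t0) \<le> \<epsilon> * (- ln (t0 / t1))" using eps by (intro mult_left_mono) auto
    then show ?thesis by (simp add: c0_def)
  qed
  have ex: "\<forall>\<^sub>F j in sequentially. ln (PS w t) - ln (PS v t) + real (mm j) / real (nn j) * (ln t - ln t)
            + (\<eta> * Lc + \<delta>) + \<epsilon> * ln (t / t0) \<le> - (c0 / 4)"
    using h1 h2 etaL by (simp add: \<delta>_def)
  have Pv: "PS v t > 0" using PSv[of t] tt w_pos0 by simp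
  show ?thesis
    by (rule combine[OF w_nonneg w_pos0 tpos st tpos Pv _ _ _ nn tail lb ex])
       (use tpos t tt c0 PS_pos[of t0] st0 in auto)
qed

end

context wseq begin

lemma case_c:
  fixes mm nn :: "nat \<Rightarrow> nat"
  assumes lam: "lam > 0" and r: "0 < r" "conv_radius w = ereal r"
    and sr: "summable (\<lambda>k. w k * r ^ k)" and sr1: "summable (\<lambda>k. real k * w k * r ^ k)"
    and eq: "PS1 w r = lam * PS w r"
    and nn: "filterlim nn at_top sequentially"
    and zp: "\<forall>\<^sub>F j in sequentially. Z w (mm j) (nn j) > 0"
    and lim: "(\<lambda>j. real (mm j) / real (nn j)) \<longlonglongrightarrow> lam"
    and eps: "\<epsilon> > 0"
  shows "(\<lambda>j. Pbb w (mm j) (nn j) (\<lambda>y. real (Ymax (nn j) y) > \<epsilon> * real (nn j))) \<longlonglongrightarrow> 0"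
proof -
  have lam0: "lam \<ge> 0" using lam by simp
  have rho: "ereal s < conv_radius w" if "0 < s" "s < r" for s using r that by simp
  have PSr: "PS w r > 0" using PS_pos[of r] sr r by simp
  obtain ks where ks: "w ks > 0" "real ks > lam"
    using exists_big[OF r(1) sr sr1 _ lam] eq by auto
  obtain A d N0 C M c where T: "\<forall>a\<in>A. 0 < w a" "M \<in> A" "real M > lam" "M > 0"
      "\<forall>k. w k \<noteq> 0 \<longrightarrow> d dvd k"
      "\<forall>X j. N0 \<le> X \<longrightarrow> d dvd X \<longrightarrow> X + C * M \<le> j * M \<longrightarrow> rp A j X"
      "c > 0" "c \<le> w 0" "\<forall>a\<in>A. c \<le> w a"
    using T0[OF ks lam0] by blast
  have dZ: "d dvd x" if "Z w x N > 0" for x N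
    by (rule Z_dvd[of w d x N]) (use T(5) that in auto)
  have dm: "\<forall>\<^sub>F j in sequentially. d dvd mm j"
    using zp by (rule eventually_mono) (rule dZ)
  define \<theta> where "\<theta> = max (lam - \<epsilon> / 4) (lam / 2)"
  have th: "\<theta> \<ge> 0" "\<theta> < lam" "lam - \<epsilon> / 4 \<le> \<theta>" using lam eps by (auto simp: \<theta>_def)
  have "(\<lambda>K. \<Sum>k<K. real k * w k * r ^ k) \<longlonglongrightarrow> PS1 w r" unfolding PS1_def by (rule summable_LIMSEQ[OF sr1])
  moreover have "\<theta> * PS w r < PS1 w r" using th PSr eq by simp
  ultimately have "\<forall>\<^sub>F K in sequentially. \<theta> * PS w r < (\<Sum>k<K. real k * w k * r ^ k)"
    by (rule order_tendstoD(1))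
  then obtain K0 where K0: "\<theta> * PS w r < (\<Sum>k<K0. real k * w k * r ^ k)"
    unfolding eventually_sequentially by blast
  obtain u where u: "0 < u" "u < r" "\<theta> * PS w u < PS1 w u"
    using approx_below[OF r(1) rho sr th(1) K0] by blast
  have su: "summable (\<lambda>k. w k * u ^ k)" using summ[of u] rho[OF u(1,2)] u by simp
  have su1: "summable (\<lambda>k. real k * w k * u ^ k)" using summ1[of u] rho[OF u(1,2)] u by simp
  have PSu: "PS w u > 0" using PS_pos[of u] su u by simp
  define \<psi> where "\<psi> = PS1 w u / PS w u"
  have psi: "\<psi> > lam - \<epsilon> / 4"
  proof -
    have "(lam - \<epsilon> / 4) * PS w u \<le> \<theta> * PS w u" using th(3) PSu by (intro mult_right_mono) auto
    then have "(lam - \<epsilon> / 4) * PS w u < PS1 w u" using u(3) by linarith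
    then show ?thesis using PSu by (simp add: \<psi>_def pos_less_divide_eq)
  qed
  define L where "L = ln r - ln u"
  have L: "L > 0" using u by (simp add: L_def)
  have J: "ln (PS w u) \<le> ln (PS w r) - \<psi> * L"
  proof -
    have "PS w (u * (r / u)) \<ge> PS w u * (r / u) powr \<psi>"
      unfolding \<psi>_def by (rule jensen_inf[OF u(1) _ su su1]) (use u sr in auto)
    then have "PS w r \<ge> PS w u * (r / u) powr \<psi>" using u by simp
    then have "ln (PS w u * (r / u) powr \<psi>) \<le> ln (PS w r)" using PSu PSr u by (subst ln_le_cancel_iff) auto
    then show ?thesis using PSu u r by (simp add: ln_mult ln_div L_def)
  qed
  define Lmax where "Lmax = \<bar>ln c\<bar> + real M * \<bar>ln r\<bar> + \<bar>ln (w 0)\<bar> + \<bar>ln (PS w r)\<bar>"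
  have Lmax0: "Lmax \<ge> 0" by (simp add: Lmax_def)
  define \<eta> where "\<eta> = min (1/2) (\<epsilon> * L / (8 * (Lmax + 1)))"
  have eta: "0 < \<eta>" "\<eta> < 1" using eps L Lmax0 by (auto simp: \<eta>_def)
  define \<delta> where "\<delta> = \<epsilon> * L / 8"
  define m0 where "m0 = min lam (real M - lam)"
  have m0: "m0 > 0" "m0 \<le> lam" "m0 \<le> real M - lam" using lam T(3) by (auto simp: m0_def)
  have lr: "(\<lambda>K. PS1 (trunc w K) r / PS (trunc w K) r) \<longlonglongrightarrow> PS1 w r / PS w r"
    using PSr by (intro tendsto_divide lim_PS1_trunc lim_PS_trunc sr sr1) auto
  have e1: "\<forall>\<^sub>F K in sequentially. \<bar>PS1 (trunc w K) r / PS (trunc w K) r - lam\<bar> < \<eta> * m0 / 2"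
  proof -
    have "PS1 w r / PS w r = lam" using eq PSr by simp
    then show ?thesis using tendstoD[OF lr, of "\<eta> * m0 / 2"] eta m0 by (simp add: dist_real_def)
  qed
  have ll: "(\<lambda>K. ln (PS w r) - ln (PS (trunc w K) r)) \<longlonglongrightarrow> ln (PS w r) - ln (PS w r)"
    using PSr by (intro tendsto_intros lim_PS_trunc sr) auto
  have e2: "\<forall>\<^sub>F K in sequentially. ln (PS w r) - ln (PS (trunc w K) r) < \<epsilon> * L / 8"
    using order_tendstoD(2)[OF ll, of "\<epsilon> * L / 8"] eps L by simp
  have "\<forall>\<^sub>F K in sequentially. (\<bar>PS1 (trunc w K) r / PS (trunc w K) r - lam\<bar> < \<eta> * m0 / 2 \<and>
      ln (PS w r) - ln (PS (trunc w K) r) < \<epsilon> * L / 8) \<and> 1 \<le> K"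
    by (intro eventually_conj e1 e2 eventually_ge_at_top)
  then obtain K where K: "\<bar>PS1 (trunc w K) r / PS (trunc w K) r - lam\<bar> < \<eta> * m0 / 2"
      "ln (PS w r) - ln (PS (trunc w K) r) < \<epsilon> * L / 8" "1 \<le> K"
    unfolding eventually_sequentially by blast
  define v where "v = trunc w K"
  have fv: "finw v K" unfolding v_def by (rule finw_trunc[OF K(3)])
  have vw: "v k \<le> w k" for k using w_nonneg by (simp add: v_def trunc_def)
  have vd: "v k \<noteq> 0 \<Longrightarrow> d dvd k" for k using T(5) by (auto simp: v_def trunc_def split: if_splits)
  have v0: "v 0 = w 0" using K(3) by (simp add: v_def trunc_def)
  have PSv1: "PS v r \<ge> w 0" using finw.PS_pos[OF fv, of r] v0 r by simp
  have PSv2: "PS v r \<le> PS w r"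
  proof -
    have "(\<Sum>k<K. w k * r ^ k) \<le> PS w r" unfolding PS_def
      using sr w_nonneg r by (intro sum_le_suminf) auto
    then show ?thesis by (simp add: v_def PS_trunc)
  qed
  define \<mu> where "\<mu> = PS1 v r / PS v r"
  have mu: "\<bar>\<mu> - lam\<bar> < \<eta> * m0 / 2" using K(1) by (simp add: \<mu>_def v_def)
  define e where "e = \<bar>lam - \<mu>\<bar>"
  have e: "e \<ge> 0" "e < \<eta> * m0 / 2" using mu by (auto simp: e_def abs_minus_commute)
  have f1: "\<eta> * \<mu> \<ge> \<eta> * lam - \<eta> * e"
  proof -
    have "lam - e \<le> \<mu>" by (simp add: e_def)
    then have "\<eta> * (lam - e) \<le> \<eta> * \<mu>" using eta by (intro mult_left_mono) auto
    then show ?thesis by (simp add: algebra_simps)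
  qed
  have f2: "\<eta> * (real M - \<mu>) \<ge> \<eta> * (real M - lam) - \<eta> * e"
  proof -
    have "real M - lam - e \<le> real M - \<mu>" by (simp add: e_def)
    then have "\<eta> * (real M - lam - e) \<le> \<eta> * (real M - \<mu>)" using eta by (intro mult_left_mono) auto
    then show ?thesis by (simp add: algebra_simps)
  qed
  have f3: "\<eta> * e \<le> e" using eta e by (intro mult_left_le_one_le) auto
  have f4: "\<eta> * m0 \<le> \<eta> * lam" "\<eta> * m0 \<le> \<eta> * (real M - lam)" using eta m0 by (intro mult_left_mono; auto)+
  have mu1: "\<bar>lam - PS1 v r / PS v r\<bar> < \<eta> * (PS1 v r / PS v r)"
    using f1 f3 f4(1) e unfolding e_def \<mu>_def by linarith
  have mu2: "\<bar>lam - PS1 v r / PS v r\<bar> < \<eta> * (real M - PS1 v r / PS v r)"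
    using f2 f3 f4(2) e unfolding e_def \<mu>_def by linarith
  define Lc where "Lc = \<bar>ln c\<bar> + real M * \<bar>ln r\<bar> + \<bar>ln (PS v r)\<bar>"
  have Lc: "0 \<le> Lc" "Lc \<le> Lmax"
  proof -
    have a1: "ln (w 0) \<le> ln (PS v r)" using PSv1 w_pos0 by simp
    have a2: "ln (PS v r) \<le> ln (PS w r)" using PSv2 PSv1 w_pos0 by simp
    have "\<bar>ln (PS v r)\<bar> \<le> \<bar>ln (w 0)\<bar> + \<bar>ln (PS w r)\<bar>"
      using a1 a2 abs_ge_self[of "ln (w 0)"] abs_ge_minus_self[of "ln (w 0)"]
        abs_ge_self[of "ln (PS w r)"] abs_ge_minus_self[of "ln (PS w r)"]
      unfolding abs_le_iff by linarith
    then show "Lc \<le> Lmax" by (simp add: Lc_def Lmax_def)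
    show "0 \<le> Lc" by (simp add: Lc_def)
  qed
  have etaL: "\<eta> * Lc \<le> \<epsilon> * L / 8"
  proof -
    have "\<eta> * Lc \<le> (\<epsilon> * L / (8 * (Lmax + 1))) * Lc" using Lc by (intro mult_right_mono) (auto simp: \<eta>_def)
    also have "\<dots> \<le> (\<epsilon> * L / (8 * (Lmax + 1))) * (Lmax + 1)" using eps L Lc by (intro mult_left_mono) auto
    also have "\<dots> = \<epsilon> * L / 8" using Lmax0 by (simp add: field_simps)
    finally show ?thesis .
  qed
  have lb: "\<forall>\<^sub>F j in sequentially. Z w (mm j) (nn j) * r ^ (mm j) \<ge>
     PS v r ^ (nn j) * exp (- ((\<eta> * Lc + \<delta>) * real (nn j)))"
    unfolding Lc_def
    by (rule LB[OF w_nonneg fv vw vd _ T(7,8) _ T(4) r(1) nn lim dm eta mu1 mu2])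
       (use T(6) T(9) eps L in \<open>auto simp: \<delta>_def\<close>)
  have tail: "\<forall>\<^sub>F j in sequentially. (\<Sum>k\<in>{k\<in>{..mm j}. \<epsilon> * real (nn j) < real k}. w k * u ^ k)
                  \<le> PS w r * (u / r) powr (\<epsilon> * real (nn j))"
    using tail_bound[OF w_nonneg u(1,2) sr] by auto
  have ml: "\<forall>\<^sub>F j in sequentially. real (mm j) / real (nn j) < lam + \<epsilon> / 4"
    using order_tendstoD(2)[OF lim, of "lam + \<epsilon> / 4"] eps by simp
  have exL: "\<forall>\<^sub>F j in sequentially. ln (PS w u) - ln (PS v r) + real (mm j) / real (nn j) * L
            + (\<eta> * Lc + \<delta>) + \<epsilon> * ln (u / r) \<le> - (\<epsilon> * L / 8)"
    using ml
  proof (rule eventually_mono)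
    fix j assume mj: "real (mm j) / real (nn j) < lam + \<epsilon> / 4"
    have mL: "real (mm j) / real (nn j) * L \<le> lam * L + \<epsilon> * L / 4"
    proof -
      have "real (mm j) / real (nn j) * L \<le> (lam + \<epsilon> / 4) * L" using mj L by (intro mult_right_mono) auto
      then show ?thesis by (simp add: algebra_simps)
    qed
    have pL: "\<psi> * L \<ge> lam * L - \<epsilon> * L / 4"
    proof -
      have "(lam - \<epsilon> / 4) * L \<le> \<psi> * L" using psi L by (intro mult_right_mono) auto
      then show ?thesis by (simp add: algebra_simps)
    qed
    have lu: "\<epsilon> * ln (u / r) = - (\<epsilon> * L)" using u r by (simp add: ln_div L_def algebra_simps)
    have h: "ln (PS w r) - ln (PS v r) < \<epsilon> * L / 8" using K(2) by (simp add: v_def)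
    show "ln (PS w u) - ln (PS v r) + real (mm j) / real (nn j) * L
            + (\<eta> * Lc + \<delta>) + \<epsilon> * ln (u / r) \<le> - (\<epsilon> * L / 8)"
      using J mL pL lu h etaL unfolding \<delta>_def by linarith
  qed
  have ex: "\<forall>\<^sub>F j in sequentially. ln (PS w u) - ln (PS v r) + real (mm j) / real (nn j) * (ln r - ln u)
            + (\<eta> * Lc + \<delta>) + \<epsilon> * ln (u / r) \<le> - (\<epsilon> * L / 8)"
    using exL unfolding L_def[symmetric] .
  have Pv: "PS v r > 0" using PSv1 w_pos0 by simp
  show ?thesis
    by (rule combine[OF w_nonneg w_pos0 u(1) su r(1) Pv _ _ _ nn tail lb ex])
       (use u r PSr eps L in auto)
qed

end

lemma Ymax_le: assumes "y \<in> boxes m n" "n \<ge> 1" shows "Ymax n y \<le> m"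
proof -
  have "y i \<le> m" if "i < n" for i
  proof -
    have "y i \<le> (\<Sum>i<n. y i)" using that by (intro member_le_sum) auto
    then show ?thesis using assms(1) by (simp add: boxes_def)
  qed
  moreover have "y ` {..<n} \<noteq> {}"
  proof -
    have "0 \<in> {..<n}" using assms(2) by simp
    then show ?thesis by blast
  qed
  ultimately show ?thesis unfolding Ymax_def by (intro Max.boundedI) auto
qed

lemma triv_a:
  fixes mm nn :: "nat \<Rightarrow> nat"
  assumes nn: "filterlim nn at_top sequentially"
    and lim: "(\<lambda>j. real (mm j) / real (nn j)) \<longlonglongrightarrow> 0" and eps: "\<epsilon> > 0"
  shows "(\<lambda>j. Pbb w (mm j) (nn j) (\<lambda>y. real (Ymax (nn j) y) > \<epsilon> * real (nn j))) \<longlonglongrightarrow> 0"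
proof (rule tendsto_eventually)
  have rn: "filterlim (\<lambda>j. real (nn j)) at_top sequentially"
    by (rule filterlim_compose[OF filterlim_real_sequentially nn])
  have n1: "\<forall>\<^sub>F j in sequentially. 1 \<le> real (nn j)" using rn[unfolded filterlim_at_top] by blast
  have ml: "\<forall>\<^sub>F j in sequentially. real (mm j) / real (nn j) < \<epsilon>"
    using order_tendstoD(2)[OF lim eps] .
  show "\<forall>\<^sub>F j in sequentially. Pbb w (mm j) (nn j) (\<lambda>y. real (Ymax (nn j) y) > \<epsilon> * real (nn j)) = 0"
    using eventually_conj[OF n1 ml]
  proof (rule eventually_mono)
    fix j assume H: "1 \<le> real (nn j) \<and> real (mm j) / real (nn j) < \<epsilon>"
    then have n: "nn j \<ge> 1" "real (nn j) > 0" by auto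
    have me: "real (mm j) < \<epsilon> * real (nn j)" using H n by (simp add: pos_divide_less_eq mult.commute)
    have E: "{y\<in>boxes (mm j) (nn j). real (Ymax (nn j) y) > \<epsilon> * real (nn j)} = {}"
    proof -
      have "real (Ymax (nn j) y) \<le> \<epsilon> * real (nn j)" if "y \<in> boxes (mm j) (nn j)" for y
      proof -
        have "Ymax (nn j) y \<le> mm j" by (rule Ymax_le[OF that n(1)])
        then have "real (Ymax (nn j) y) \<le> real (mm j)" by simp
        then show ?thesis using me by linarith
      qed
      then show ?thesis by force
    qed
    show "Pbb w (mm j) (nn j) (\<lambda>y. real (Ymax (nn j) y) > \<epsilon> * real (nn j)) = 0"
      unfolding Pbb_def E by simp
  qed
qed

lemma triv_d:
  fixes mm nn :: "nat \<Rightarrow> nat"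
  assumes nn: "filterlim nn at_top sequentially"
    and supp: "\<And>k. w k > 0 \<Longrightarrow> real k \<le> lam" and w0: "\<And>k. w k \<ge> 0" and eps: "\<epsilon> > 0"
  shows "(\<lambda>j. Pbb w (mm j) (nn j) (\<lambda>y. real (Ymax (nn j) y) > \<epsilon> * real (nn j))) \<longlonglongrightarrow> 0"
proof (rule tendsto_eventually)
  have rn: "filterlim (\<lambda>j. real (nn j)) at_top sequentially"
    by (rule filterlim_compose[OF filterlim_real_sequentially nn])
  have big: "\<forall>\<^sub>F j in sequentially. B \<le> real (nn j)" for B using rn[unfolded filterlim_at_top] by blast
  show "\<forall>\<^sub>F j in sequentially. Pbb w (mm j) (nn j) (\<lambda>y. real (Ymax (nn j) y) > \<epsilon> * real (nn j)) = 0"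
    using eventually_conj[OF big[of 1] big[of "\<bar>lam\<bar> / \<epsilon> + 1"]]
  proof (rule eventually_mono)
    fix j assume H: "1 \<le> real (nn j) \<and> \<bar>lam\<bar> / \<epsilon> + 1 \<le> real (nn j)"
    define n where "n = nn j"
    have n: "n \<ge> 1" using H by (simp add: n_def)
    have "\<bar>lam\<bar> / \<epsilon> < real n" using H by (simp add: n_def)
    then have le: "lam < \<epsilon> * real n" using eps by (simp add: pos_divide_less_eq mult.commute)
    have z: "wt w n y = 0" if y: "y \<in> boxes (mm j) n" "real (Ymax n y) > \<epsilon> * real n" for y
    proof (rule ccontr)
      assume nz: "wt w n y \<noteq> 0"
      have "w (y i) > 0" if "i < n" for i
      proof -
        have "w (y i) \<noteq> 0" using nz that by (auto simp: wt_def prod_zero_iff)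
        then show ?thesis using w0[of "y i"] by simp
      qed
      then have "real (y i) \<le> lam" if "i < n" for i using supp that by blast
      moreover have "Ymax n y \<in> y ` {..<n}"
      proof -
        have "0 \<in> {..<n}" using n by simp
        then show ?thesis unfolding Ymax_def by (intro Max_in) auto
      qed
      ultimately have "real (Ymax n y) \<le> lam" by auto
      then show False using y le by simp
    qed
    have "(\<Sum>y\<in>{y\<in>boxes (mm j) n. \<epsilon> * real n < real (Ymax n y)}. wt w n y) = 0"
      using z by (intro sum.neutral) auto
    then show "Pbb w (mm j) (nn j) (\<lambda>y. real (Ymax (nn j) y) > \<epsilon> * real (nn j)) = 0"
      by (simp add: Pbb_def n_def)
  qed
qed

theorem theorem18p2:
  fixes w :: "nat \<Rightarrow> real" and mm nn :: "nat \<Rightarrow> nat" and lam :: real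
  assumes "\<forall>k. w k \<ge> 0" and "w 0 > 0" and "\<exists>k\<ge>1. w k > 0"
    and "filterlim nn at_top sequentially"
    and "eventually (\<lambda>j. Z w (mm j) (nn j) > 0) sequentially"
    and "(\<lambda>j. real (mm j) / real (nn j)) \<longlonglongrightarrow> lam"
    and "0 \<le> lam"
    and "ennreal lam \<le> nu w"
  shows "\<forall>\<epsilon>>0. (\<lambda>j. Pbb w (mm j) (nn j)
            (\<lambda>y. real (Ymax (nn j) y) > \<epsilon> * real (nn j))) \<longlonglongrightarrow> 0"
proof -
  interpret wseq w using assms(1,2) by unfold_locales auto
  have w0: "\<And>k. w k \<ge> 0" using assms(1) by auto
  show ?thesis
  proof (intro allI impI)
    fix \<epsilon> :: real assume eps: "\<epsilon> > 0"
    show "(\<lambda>j. Pbb w (mm j) (nn j) (\<lambda>y. real (Ymax (nn j) y) > \<epsilon> * real (nn j))) \<longlonglongrightarrow> 0"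
    proof (cases "lam = 0")
      case True
      then show ?thesis using triv_a[OF assms(4) _ eps] assms(6) by simp
    next
      case False
      then have lam: "lam > 0" using assms(7) by simp
      from NU[OF lam assms(8)] show ?thesis
      proof (elim disjE exE conjE)
        fix t1 t0 assume "0 < t1" "t1 < t0" "ereal t0 < conv_radius w" "lam * PS w t1 < PS1 w t1"
        then show ?thesis by (intro case_b[OF lam _ _ _ _ assms(4) assms(5) assms(6) eps])
      next
        fix r assume "0 < r" "conv_radius w = ereal r" "summable (\<lambda>k. w k * r ^ k)"
          "summable (\<lambda>k. real k * w k * r ^ k)" "PS1 w r = lam * PS w r"
        then show ?thesis by (intro case_c[OF lam _ _ _ _ _ assms(4) assms(5) assms(6) eps])
      next
        assume "\<forall>k. 0 < w k \<longrightarrow> real k \<le> lam"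
        then show ?thesis by (intro triv_d[OF assms(4) _ w0 eps]) auto
      qed
    qed
  qed
qed

end
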